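(* Assume conditions (i) and (ii) of the context. There exists a polynomial $h_2:\mathbb R^5\to\mathbb R$ such that for all $d\in\mathbb N$, every architecture $a$ with input dimension $d$, all $R\in(0,\infty)$, $K,D\in[1,\infty)$, $\varepsilon,\varrho\in(0,1)$ and every $m\in\mathbb N$ with $$m\ge K^{5\lambda}h_2\big(\varepsilon^{-1},P(a),\log R,\log(\varrho^{-1}),D\big),$$ it holds with $\mathcal H=\mathcal N_{a,R,D}$ that $$\mathbb P\Big(\sup_{f\in\mathcal H}\big|\mathcal E_d^{(K)}(f)-\mathcal E_{d,m}^{(K)}(f)\big|\le\varepsilon\Big)\ge1-\varrho.$$
   Context: Fix $T\in(0,\infty)$ and reals $u<v$. For each $d\in\mathbb N$: $\mu_d,\sigma_d$ Lipschitz, $\varphi_d:\mathbb R^d\to\mathbb R$ measurable; on a filtered probability space $(\Omega,\mathcal F,\mathbb P)$, $B$ a standard $d$-dimensional Brownian motion, $X_d$ uniform on $[u,v]^d$ and $\mathcal F_0$-measurable, $S_t=X_d+\int_0^t\mu_d(S_s)ds+\int_0^t\sigma_d(S_s)dB_s$, $Y_d=S_T=(Y_{d,1},\dots,Y_{d,d})$. Let $(\mathbf x_i,\mathbf y_i)_{i\ge1}$ be i.i.d. copies of $(X_d,Y_d)$. Truncation: $\varphi_d^{(K)}(x)=\mathbf 1\{\|x\|_\infty\le K\}\varphi_d(x)$, $\mathcal E_d^{(K)}(f)=\mathbb E[(f(X_d)-\varphi_d^{(K)}(Y_d))^2]$, $\mathcal E_{d,m}^{(K)}(f)=\frac1m\sum_{i=1}^m(f(\mathbf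 x_i)-\varphi_d^{(K)}(\mathbf y_i))^2$. Conditions: (i) there is $c_1\in(0,\infty)$ with $\mathbb P(|Y_{d,i}|\ge t)\le2\exp\{-c_1(\log t)^2\}$ for all $d$, $t\ge1$, $i\le d$; (ii) there are $c_2\in(0,\infty)$, $\lambda\in[2,\infty)$ with $|\varphi_d(y)|\le c_2(1+\|y\|_2^\lambda)$ for all $d$, $y$. ReLU networks: architecture $a=(N_0,\dots,N_L)$ with $N_0=d$, $N_L=1$; parameters $\theta=((A_l,b_l))_{l=1}^L$, $A_l\in\mathbb R^{N_l\times N_{l-1}}$, $b_l\in\mathbb R^{N_l}$; $\Phi_\theta=W_L\circ\rho\circ\cdots\circ\rho\circ W_1$, $W_l(x)=A_lx+b_l$, $\rho$ componentwise ReLU; $\|\theta\|_\infty$ maximal absolute entry; $P(a)=\sum_l N_l(N_{l-1}+1)$; $\mathcal N_{a,R}=\{\Phi_\theta|_{[u,v]^d}:\|\theta\|_\infty\le R\}$; $\mathrm{Clip}_D(x)=\min\{|x|,D\}\operatorname{sgn}(x)$; $\mathcal N_{a,R,D}=\{\mathrm{Clip}_D\circ\Phi:\Phi\in\mathcal N_{a,R}\}$. *)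

theory Defs
  imports "HOL-Probability.Probability"
begin

text \<open>Vectors in R^d are represented as functions nat \<Rightarrow> real, only the
coordinates 0..d-1 being relevant (elements of the product measure space
PiM {..<d} are extensional, i.e. undefined outside {..<d}).\<close>

definition vec_space :: "nat \<Rightarrow> (nat \<Rightarrow> real) measure" where
  "vec_space d = PiM {..<d} (\<lambda>_. (borel :: real measure))"

definition unif_cube :: "real \<Rightarrow> real \<Rightarrow> nat \<Rightarrow> (nat \<Rightarrow> real) measure" where
  "unif_cube u v d = PiM {..<d} (\<lambda>_. uniform_measure lborel {u..v})"

definition cube :: "real \<Rightarrow> real \<Rightarrow> nat \<Rightarrow> (nat \<Rightarrow> real) set" where
  "cube u v d = {x. \<forall>i<d. x i \<in> {u..v}}"

definition norm_inf :: "nat \<Rightarrow> (nat \<Rightarrow> real) \<Rightarrow> real" where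
  "norm_inf d y = (MAX i\<in>{..<d}. \<bar>y i\<bar>)"

definition norm2 :: "nat \<Rightarrow> (nat \<Rightarrow> real) \<Rightarrow> real" where
  "norm2 d y = sqrt (\<Sum>i<d. (y i)\<^sup>2)"

definition poly5 :: "(real \<Rightarrow> real \<Rightarrow> real \<Rightarrow> real \<Rightarrow> real \<Rightarrow> real) \<Rightarrow> bool" where
  "poly5 h \<longleftrightarrow> (\<exists>(N::nat) (c :: nat \<Rightarrow> nat \<Rightarrow> nat \<Rightarrow> nat \<Rightarrow> nat \<Rightarrow> real).
     \<forall>x1 x2 x3 x4 x5. h x1 x2 x3 x4 x5 =
       (\<Sum>i1\<le>N. \<Sum>i2\<le>N. \<Sum>i3\<le>N. \<Sum>i4\<le>N. \<Sum>i5\<le>N.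
          c i1 i2 i3 i4 i5 * x1 ^ i1 * x2 ^ i2 * x3 ^ i3 * x4 ^ i4 * x5 ^ i5))"

text \<open>ReLU networks. An architecture is a list [N_0,...,N_L];
parameters are a list [(A_1,b_1),...,(A_L,b_L)], A_l j k is the (j,k) entry.\<close>

type_synonym params = "((nat \<Rightarrow> nat \<Rightarrow> real) \<times> (nat \<Rightarrow> real)) list"

definition affine :: "nat \<Rightarrow> nat \<Rightarrow> (nat \<Rightarrow> nat \<Rightarrow> real) \<Rightarrow> (nat \<Rightarrow> real) \<Rightarrow> (nat \<Rightarrow> real) \<Rightarrow> (nat \<Rightarrow> real)" where
  "affine nin nout A b x = (\<lambda>j. if j < nout then (\<Sum>k<nin. A j k * x k) + b j else 0)"

definition relu_vec :: "(nat \<Rightarrow> real) \<Rightarrow> (nat \<Rightarrow> real)" where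
  "relu_vec x = (\<lambda>j. max 0 (x j))"

fun net_eval :: "nat list \<Rightarrow> params \<Rightarrow> (nat \<Rightarrow> real) \<Rightarrow> (nat \<Rightarrow> real)" where
  "net_eval (n0 # n1 # ns) ((A, b) # ps) x =
     (let y = affine n0 n1 A b x in if ns = [] then y else net_eval (n1 # ns) ps (relu_vec y))"
| "net_eval _ _ x = x"

text \<open>Realization Phi_theta : R^{N_0} \<rightarrow> R (output dimension N_L = 1).\<close>
definition realization :: "nat list \<Rightarrow> params \<Rightarrow> (nat \<Rightarrow> real) \<Rightarrow> real" where
  "realization a \<theta> x = net_eval a \<theta> x 0"

definition is_arch :: "nat \<Rightarrow> nat list \<Rightarrow> bool" where
  "is_arch d a \<longleftrightarrow> length a \<ge> 2 \<and> hd a = d \<and> last a = 1 \<and> (\<forall>l<length a. a ! l \<ge> 1)"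

definition param_count :: "nat list \<Rightarrow> nat" where
  "param_count a = (\<Sum>l\<in>{1..<length a}. a ! l * (a ! (l - 1) + 1))"

definition param_bounded :: "nat list \<Rightarrow> real \<Rightarrow> params \<Rightarrow> bool" where
  "param_bounded a R \<theta> \<longleftrightarrow> length \<theta> = length a - 1 \<and>
     (\<forall>l<length \<theta>. (\<forall>j<a ! (l + 1). \<bar>snd (\<theta> ! l) j\<bar> \<le> R \<and>
        (\<forall>k<a ! l. \<bar>fst (\<theta> ! l) j k\<bar> \<le> R)))"

definition clip :: "real \<Rightarrow> real \<Rightarrow> real" where
  "clip D x = min \<bar>x\<bar> D * sgn x"

text \<open>N_{a,R,D}: clipped network realizations restricted to [u,v]^d
(values outside the cube set to 0; they are never used).\<close>
definition NN_class :: "real \<Rightarrow> real \<Rightarrow> nat list \<Rightarrow> real \<Rightarrow> real \<Rightarrow> ((nat \<Rightarrow> real) \<Rightarrow> real) set" where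
  "NN_class u v a R D = {(\<lambda>x. if x \<in> cube u v (hd a) then clip D (realization a \<theta> x) else 0) | \<theta>. param_bounded a R \<theta>}"

definition trunc :: "nat \<Rightarrow> real \<Rightarrow> ((nat \<Rightarrow> real) \<Rightarrow> real) \<Rightarrow> (nat \<Rightarrow> real) \<Rightarrow> real" where
  "trunc d K \<phi> y = (if norm_inf d y \<le> K then \<phi> y else 0)"

end

theory Submission
  imports Defs
begin


definition pclose :: "nat list \<Rightarrow> real \<Rightarrow> params \<Rightarrow> params \<Rightarrow> bool" where
  "pclose a \<delta> \<theta> \<theta>' \<longleftrightarrow> length \<theta> = length \<theta>' \<and>
     (\<forall>l<length \<theta>. (\<forall>j<a ! (l + 1). \<bar>snd (\<theta> ! l) j - snd (\<theta>' ! l) j\<bar> \<le> \<delta> \<and>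
        (\<forall>k<a ! l. \<bar>fst (\<theta> ! l) j k - fst (\<theta>' ! l) j k\<bar> \<le> \<delta>)))"

lemma all_less_Suc_split: "(\<forall>l<Suc n. P l) \<longleftrightarrow> P 0 \<and> (\<forall>l<n. P (Suc l))"
  using less_Suc_eq_0_disj by auto

lemma param_bounded_Cons:
  "param_bounded (n0 # n1 # ns) R ((A, b) # ps) \<longleftrightarrow>
    (\<forall>j<n1. \<bar>b j\<bar> \<le> R \<and> (\<forall>k<n0. \<bar>A j k\<bar> \<le> R)) \<and> param_bounded (n1 # ns) R ps"
  unfolding param_bounded_def by (simp only: length_Cons all_less_Suc_split) auto

lemma pclose_Cons:
  "pclose (n0 # n1 # ns) \<delta> ((A, b) # ps) ((A', b') # ps') \<longleftrightarrow>
    (\<forall>j<n1. \<bar>b j - b' j\<bar> \<le> \<delta> \<and> (\<forall>k<n0. \<bar>A j k - A' j k\<bar> \<le> \<delta>)) \<and> pclose (n1 # ns) \<delta> ps ps'"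
  unfolding pclose_def by (simp only: length_Cons all_less_Suc_split) auto

lemma param_bounded_mono: "param_bounded a R \<theta> \<Longrightarrow> R \<le> R' \<Longrightarrow> param_bounded a R' \<theta>"
  unfolding param_bounded_def by force

lemma param_bounded_len: "param_bounded a R \<theta> \<Longrightarrow> length \<theta> = length a - 1"
  unfolding param_bounded_def by simp

lemma layer_bound:
  fixes A :: "nat \<Rightarrow> nat \<Rightarrow> real"
  assumes "\<forall>j<n1. \<bar>b j\<bar> \<le> R \<and> (\<forall>k<n0. \<bar>A j k\<bar> \<le> R)" "\<forall>k<n0. \<bar>x k\<bar> \<le> r"
    "0 \<le> r" "1 \<le> R" "real n0 + 1 \<le> G"
  shows "\<bar>affine n0 n1 A b x j\<bar> \<le> R * G * (r + 1)"
proof (cases "j < n1")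
  case True
  have "\<bar>(\<Sum>k<n0. A j k * x k) + b j\<bar> \<le> \<bar>\<Sum>k<n0. A j k * x k\<bar> + \<bar>b j\<bar>"
    by (rule abs_triangle_ineq)
  also have "\<dots> \<le> (\<Sum>k<n0. \<bar>A j k * x k\<bar>) + \<bar>b j\<bar>"
    by (intro add_mono sum_abs order_refl)
  also have "\<dots> \<le> (\<Sum>k<n0. R * r) + R"
  proof (intro add_mono sum_mono)
    fix k assume k: "k \<in> {..<n0}"
    show "\<bar>A j k * x k\<bar> \<le> R * r" unfolding abs_mult
      using assms True k by (intro mult_mono) auto
  qed (use assms True in auto)
  also have "\<dots> = R * (real n0 * r) + R" by simp
  also have "\<dots> \<le> R * (G * r) + R * G"
  proof -
    have "real n0 * r \<le> G * r" using assms by (intro mult_right_mono) auto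
    then have "R * (real n0 * r) \<le> R * (G * r)" using assms by (intro mult_left_mono) auto
    moreover have "R * 1 \<le> R * G" using assms by (intro mult_left_mono) auto
    ultimately show ?thesis by simp
  qed
  also have "\<dots> = R * G * (r + 1)" by (simp add: algebra_simps)
  finally have fin: "\<bar>(\<Sum>k<n0. A j k * x k) + b j\<bar> \<le> R * G * (r + 1)" .
  have "affine n0 n1 A b x j = (\<Sum>k<n0. A j k * x k) + b j" using True by (simp add: affine_def)
  then show ?thesis using fin by simp
next
  case False
  have "0 \<le> R * G * (r + 1)" using assms by (intro mult_nonneg_nonneg) auto
  then show ?thesis using False by (simp add: affine_def)
qed


lemma layer_diff:
  fixes A A' :: "nat \<Rightarrow> nat \<Rightarrow> real"
  assumes "\<forall>j<n1. \<bar>b j\<bar> \<le> R \<and> (\<forall>k<n0. \<bar>A j k\<bar> \<le> R)"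
    "\<forall>j<n1. \<bar>b j - b' j\<bar> \<le> \<delta> \<and> (\<forall>k<n0. \<bar>A j k - A' j k\<bar> \<le> \<delta>)"
    "\<forall>k<n0. \<bar>x' k\<bar> \<le> r \<and> \<bar>x k - x' k\<bar> \<le> e"
    "0 \<le> r" "0 \<le> e" "0 \<le> \<delta>" "1 \<le> R" "real n0 + 1 \<le> G"
  shows "\<bar>affine n0 n1 A b x j - affine n0 n1 A' b' x' j\<bar> \<le> 2 * R * G * (e + \<delta> * (r + 1))"
proof (cases "j < n1")
  case True
  have eq: "(\<Sum>k<n0. A j k * x k) + b j - ((\<Sum>k<n0. A' j k * x' k) + b' j)
     = (\<Sum>k<n0. A j k * (x k - x' k) + (A j k - A' j k) * x' k) + (b j - b' j)"
  proof -
    have "(\<Sum>k<n0. A j k * (x k - x' k) + (A j k - A' j k) * x' k) = (\<Sum>k<n0. A j k * x k - A' j k * x' k)"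
      by (intro sum.cong) (auto simp: algebra_simps)
    also have "\<dots> = (\<Sum>k<n0. A j k * x k) - (\<Sum>k<n0. A' j k * x' k)"
      by (rule sum_subtractf)
    finally show ?thesis by simp
  qed
  have "\<bar>(\<Sum>k<n0. A j k * (x k - x' k) + (A j k - A' j k) * x' k) + (b j - b' j)\<bar>
     \<le> \<bar>\<Sum>k<n0. A j k * (x k - x' k) + (A j k - A' j k) * x' k\<bar> + \<bar>b j - b' j\<bar>"
    by (rule abs_triangle_ineq)
  also have "\<dots> \<le> (\<Sum>k<n0. \<bar>A j k * (x k - x' k) + (A j k - A' j k) * x' k\<bar>) + \<bar>b j - b' j\<bar>"
    by (intro add_mono sum_abs order_refl)
  also have "\<dots> \<le> (\<Sum>k<n0. R * e + \<delta> * r) + \<delta>"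
  proof (intro add_mono sum_mono)
    fix k assume k: "k \<in> {..<n0}"
    have "\<bar>A j k * (x k - x' k) + (A j k - A' j k) * x' k\<bar> \<le> \<bar>A j k * (x k - x' k)\<bar> + \<bar>(A j k - A' j k) * x' k\<bar>"
      by (rule abs_triangle_ineq)
    also have "\<dots> = \<bar>A j k\<bar> * \<bar>x k - x' k\<bar> + \<bar>A j k - A' j k\<bar> * \<bar>x' k\<bar>"
      by (simp add: abs_mult)
    also have "\<dots> \<le> R * e + \<delta> * r"
      using assms True k by (intro add_mono mult_mono) auto
    finally show "\<bar>A j k * (x k - x' k) + (A j k - A' j k) * x' k\<bar> \<le> R * e + \<delta> * r" .
  qed (use assms True in auto)
  also have "\<dots> = real n0 * (R * e + \<delta> * r) + \<delta>" by simp
  also have "\<dots> \<le> G * (R * e + \<delta> * r) + \<delta>"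
    using assms by (intro add_mono mult_right_mono) auto
  also have "\<dots> \<le> 2 * R * G * (e + \<delta> * (r + 1))"
  proof -
    have G1: "1 \<le> G" using assms by simp
    have a1: "G * (R * e) \<le> 2 * R * G * e" using assms G1 by (simp add: mult_nonneg_nonneg)
    have a2: "G * (\<delta> * r) \<le> R * G * \<delta> * r"
    proof -
      have "1 * (G * \<delta> * r) \<le> R * (G * \<delta> * r)"
        using assms G1 by (intro mult_right_mono) (auto simp: mult_nonneg_nonneg)
      then show ?thesis by (simp add: algebra_simps)
    qed
    have a3: "\<delta> \<le> R * G * \<delta>"
    proof -
      have "1 * \<delta> \<le> (R * G) * \<delta>"
        using assms G1 mult_mono[of 1 R 1 G] by (intro mult_right_mono) auto
      then show ?thesis by simp
    qed
    have a4: "0 \<le> R * G * \<delta> * r" using assms G1 by (simp add: mult_nonneg_nonneg)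
    have a5: "0 \<le> R * G * \<delta>" using assms G1 by (simp add: mult_nonneg_nonneg)
    have a6: "2 * R * G * (e + \<delta> * (r + 1)) = 2 * R * G * e + 2 * (R * G * \<delta> * r) + 2 * (R * G * \<delta>)"
      by (simp add: algebra_simps)
    have a7: "G * (R * e + \<delta> * r) + \<delta> = G * (R * e) + G * (\<delta> * r) + \<delta>"
      by (simp add: algebra_simps)
    show ?thesis unfolding a6 a7 using a1 a2 a3 a4 a5 by linarith
  qed
  finally have fin: "\<bar>(\<Sum>k<n0. A j k * x k) + b j - ((\<Sum>k<n0. A' j k * x' k) + b' j)\<bar> \<le> 2 * R * G * (e + \<delta> * (r + 1))"
    unfolding eq .
  have "affine n0 n1 A b x j - affine n0 n1 A' b' x' j = (\<Sum>k<n0. A j k * x k) + b j - ((\<Sum>k<n0. A' j k * x' k) + b' j)"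
    using True by (simp add: affine_def)
  then show ?thesis using fin by simp
next
  case False
  have "0 \<le> 2 * R * G * (e + \<delta> * (r + 1))" using assms by (intro mult_nonneg_nonneg add_nonneg_nonneg) auto
  then show ?thesis using False by (simp add: affine_def)
qed


lemma relu_abs: "\<bar>max 0 (a::real)\<bar> \<le> \<bar>a\<bar>" by auto
lemma relu_lip: "\<bar>max 0 (a::real) - max 0 b\<bar> \<le> \<bar>a - b\<bar>" by auto

lemma net_diff:
  assumes "param_bounded ns R \<theta>" "param_bounded ns R \<theta>'" "pclose ns \<delta> \<theta> \<theta>'" "2 \<le> length ns"
    "\<forall>n\<in>set ns. real n + 1 \<le> G" "\<forall>k<hd ns. \<bar>x' k\<bar> \<le> r \<and> \<bar>x k - x' k\<bar> \<le> e"
    "0 \<le> r" "0 \<le> e" "0 \<le> \<delta>" "1 \<le> R"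
  shows "\<bar>net_eval ns \<theta> x j - net_eval ns \<theta>' x' j\<bar>
     \<le> (e + real (length ns - 1) * \<delta> * (r + 1)) * (2 * R * G) ^ (length ns - 1)"
  using assms
proof (induction \<theta> arbitrary: ns \<theta>' x x' r e j)
  case Nil
  then show ?case by (simp add: param_bounded_def)
next
  case (Cons p ps)
  obtain A b where p: "p = (A, b)" by force
  from Cons.prems(4) obtain n0 n1 rest where ns: "ns = n0 # n1 # rest"
    by (auto simp: numeral_2_eq_2 Suc_le_length_iff)
  from Cons.prems(2) have "length \<theta>' = Suc (length ps)"
    using Cons.prems(1) by (simp add: param_bounded_def)
  then obtain q ps' where "\<theta>' = q # ps'" by (cases \<theta>') auto
  moreover obtain A' b' where "q = (A', b')" by force
  ultimately have th': "\<theta>' = (A', b') # ps'" by simp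
  have pb: "\<forall>j<n1. \<bar>b j\<bar> \<le> R \<and> (\<forall>k<n0. \<bar>A j k\<bar> \<le> R)" "param_bounded (n1 # rest) R ps"
    using Cons.prems(1) unfolding ns p param_bounded_Cons by auto
  have pb': "\<forall>j<n1. \<bar>b' j\<bar> \<le> R \<and> (\<forall>k<n0. \<bar>A' j k\<bar> \<le> R)" "param_bounded (n1 # rest) R ps'"
    using Cons.prems(2) unfolding ns th' param_bounded_Cons by auto
  have pc: "\<forall>j<n1. \<bar>b j - b' j\<bar> \<le> \<delta> \<and> (\<forall>k<n0. \<bar>A j k - A' j k\<bar> \<le> \<delta>)" "pclose (n1 # rest) \<delta> ps ps'"
    using Cons.prems(3) unfolding ns p th' pclose_Cons by auto
  have G0: "real n0 + 1 \<le> G" "real n1 + 1 \<le> G" using Cons.prems(5) ns by auto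
  have G1: "1 \<le> G" using G0 by simp
  have RG1: "1 \<le> R * G" using mult_mono[of 1 R 1 G] Cons.prems(10) G1 by simp
  have inp: "\<forall>k<n0. \<bar>x' k\<bar> \<le> r \<and> \<bar>x k - x' k\<bar> \<le> e" using Cons.prems(6) ns by simp
  define y where "y = affine n0 n1 A b x"
  define y' where "y' = affine n0 n1 A' b' x'"
  have ld: "\<And>j. \<bar>y j - y' j\<bar> \<le> 2 * R * G * (e + \<delta> * (r + 1))"
    unfolding y_def y'_def
    by (rule layer_diff[OF pb(1) pc(1) inp]) (use Cons.prems G0 in auto)
  have lb: "\<And>j. \<bar>y' j\<bar> \<le> R * G * (r + 1)"
    unfolding y'_def
    by (rule layer_bound[OF pb'(1)]) (use Cons.prems G0 inp in auto)
  show ?case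
  proof (cases "rest = []")
    case True
    have "net_eval ns (p # ps) x j - net_eval ns \<theta>' x' j = y j - y' j"
      unfolding ns p th' y_def y'_def using True by simp
    then show ?thesis using ld[of j] True ns by (simp add: algebra_simps)
  next
    case False
    have eq: "net_eval ns (p # ps) x j - net_eval ns \<theta>' x' j
       = net_eval (n1 # rest) ps (relu_vec y) j - net_eval (n1 # rest) ps' (relu_vec y') j"
      unfolding ns p th' y_def y'_def using False by simp
    define r1 where "r1 = 2 * R * G * (r + 1) - 1"
    define e1 where "e1 = 2 * R * G * (e + \<delta> * (r + 1))"
    have r1: "R * G * (r + 1) \<le> r1" "0 \<le> r1"
    proof -
      have "1 \<le> R * G * (r + 1)" using RG1 Cons.prems(7) mult_mono[of 1 "R*G" 1 "r+1"] by simp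
      then show "R * G * (r + 1) \<le> r1" "0 \<le> r1" unfolding r1_def by (simp_all only: mult.assoc)
    qed
    have e1: "0 \<le> e1" unfolding e1_def using Cons.prems RG1 G1 by (intro mult_nonneg_nonneg add_nonneg_nonneg) auto
    have inp2: "\<forall>k<hd (n1 # rest). \<bar>relu_vec y' k\<bar> \<le> r1 \<and> \<bar>relu_vec y k - relu_vec y' k\<bar> \<le> e1"
    proof (intro allI impI conjI)
      fix k
      show "\<bar>relu_vec y' k\<bar> \<le> r1" unfolding relu_vec_def using relu_abs[of "y' k"] lb[of k] r1 by linarith
      show "\<bar>relu_vec y k - relu_vec y' k\<bar> \<le> e1" unfolding relu_vec_def e1_def
        using relu_lip[of "y k" "y' k"] ld[of k] by linarith
    qed
    have len: "2 \<le> length (n1 # rest)" using False by (cases rest) auto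
    have IH: "\<bar>net_eval (n1 # rest) ps (relu_vec y) j - net_eval (n1 # rest) ps' (relu_vec y') j\<bar>
      \<le> (e1 + real (length (n1 # rest) - 1) * \<delta> * (r1 + 1)) * (2 * R * G) ^ (length (n1 # rest) - 1)"
      by (rule Cons.IH[OF pb(2) pb'(2) pc(2) len _ inp2 r1(2) e1]) (use Cons.prems ns in auto)
    have "(e1 + real (length (n1 # rest) - 1) * \<delta> * (r1 + 1)) * (2 * R * G) ^ (length (n1 # rest) - 1)
      = (e + real (length ns - 1) * \<delta> * (r + 1)) * (2 * R * G) ^ (length ns - 1)"
    proof -
      have "e1 + real (length rest) * \<delta> * (r1 + 1) = (2 * R * G) * (e + real (Suc (length rest)) * \<delta> * (r + 1))"
        unfolding e1_def r1_def by (simp add: algebra_simps)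
      then show ?thesis unfolding ns by (simp add: power_Suc mult_ac)
    qed
    then show ?thesis using IH eq by simp
  qed
qed


lemma param_count_Cons: "param_count (n0 # n1 # ns) = n1 * (n0 + 1) + param_count (n1 # ns)"
proof -
  have "param_count (n0 # n1 # ns) = (\<Sum>l\<in>{1..<Suc (Suc (length ns))}. (n0 # n1 # ns) ! l * ((n0 # n1 # ns) ! (l - 1) + 1))"
    by (simp add: param_count_def)
  also have "\<dots> = n1 * (n0 + 1) + (\<Sum>l\<in>{Suc 1..<Suc (Suc (length ns))}. (n0 # n1 # ns) ! l * ((n0 # n1 # ns) ! (l - 1) + 1))"
    by (subst sum.atLeast_Suc_lessThan) auto
  also have "(\<Sum>l\<in>{Suc 1..<Suc (Suc (length ns))}. (n0 # n1 # ns) ! l * ((n0 # n1 # ns) ! (l - 1) + 1))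
     = (\<Sum>l\<in>{1..<Suc (length ns)}. (n0 # n1 # ns) ! Suc l * ((n0 # n1 # ns) ! (Suc l - 1) + 1))"
    by (rule sum.shift_bounds_Suc_ivl)
  also have "\<dots> = (\<Sum>l\<in>{1..<Suc (length ns)}. (n1 # ns) ! l * ((n1 # ns) ! (l - 1) + 1))"
    by (intro sum.cong refl) (auto simp: nth_Cons')
  also have "\<dots> = param_count (n1 # ns)" by (simp add: param_count_def)
  finally show ?thesis .
qed

lemma param_count_single: "param_count [n] = 0"
  by (simp add: param_count_def)

lemma param_count_facts:
  "2 \<le> length ns \<Longrightarrow> \<forall>n\<in>set ns. 1 \<le> n \<Longrightarrow>
    (\<forall>n\<in>set ns. n + 1 \<le> param_count ns) \<and> length ns - 1 \<le> param_count ns"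
proof (induction ns)
  case Nil
  then show ?case by simp
next
  case (Cons n0 t)
  then obtain n1 rest where t: "t = n1 # rest" by (cases t) auto
  have n0: "1 \<le> n0" and n1: "1 \<le> n1" using Cons.prems t by auto
  have a: "n0 + 1 \<le> n1 * (n0 + 1)" using n1 mult_le_mono1[of 1 n1 "n0+1"] by simp
  have b: "n1 + 1 \<le> n1 * (n0 + 1)" using n0 n1 by (simp add: algebra_simps)
  show ?case
  proof (cases "rest = []")
    case True
    then show ?thesis using a b t by (simp add: param_count_Cons param_count_single)
  next
    case False
    then have "2 \<le> length t" using t by (cases rest) auto
    with Cons.IH Cons.prems have IH: "(\<forall>n\<in>set t. n + 1 \<le> param_count t) \<and> length t - 1 \<le> param_count t" by auto
    have "length t - 1 + 1 = length t" using \<open>2 \<le> length t\<close> by simp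
    then show ?thesis using IH a b t by (auto simp: param_count_Cons)
  qed
qed

definition GA :: "nat \<Rightarrow> nat \<Rightarrow> real set \<Rightarrow> (nat \<Rightarrow> nat \<Rightarrow> real) set" where
  "GA n0 n1 S = (\<lambda>g j k. if j < n1 \<and> k < n0 then g (j, k) else 0) ` (PiE ({..<n1} \<times> {..<n0}) (\<lambda>_. S))"

definition Gb :: "nat \<Rightarrow> real set \<Rightarrow> (nat \<Rightarrow> real) set" where
  "Gb n1 S = (\<lambda>g j. if j < n1 then g j else 0) ` (PiE {..<n1} (\<lambda>_. S))"

fun grid :: "nat list \<Rightarrow> real set \<Rightarrow> params set" where
  "grid (n0 # n1 # ns) S = (\<lambda>(A, b, ps). (A, b) # ps) ` (GA n0 n1 S \<times> Gb n1 S \<times> grid (n1 # ns) S)"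
| "grid _ S = {[]}"

lemma img_card: "card X = c \<Longrightarrow> finite X \<Longrightarrow> finite (h ` X) \<and> card (h ` X) \<le> c"
  using card_image_le by auto

lemma GA_fin: "finite S \<Longrightarrow> finite (GA n0 n1 S) \<and> card (GA n0 n1 S) \<le> card S ^ (n1 * n0)"
proof -
  assume S: "finite S"
  have "card (PiE ({..<n1} \<times> {..<n0}) (\<lambda>_. S)) = card S ^ (n1 * n0)"
    by (simp add: card_PiE card_cartesian_product)
  moreover have f: "finite (PiE ({..<n1} \<times> {..<n0}) (\<lambda>_. S))" using S by (simp add: finite_PiE)
  ultimately show ?thesis unfolding GA_def by (rule img_card)
qed

lemma Gb_fin: "finite S \<Longrightarrow> finite (Gb n1 S) \<and> card (Gb n1 S) \<le> card S ^ n1"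
proof -
  assume S: "finite S"
  have "card (PiE {..<n1} (\<lambda>_. S)) = card S ^ n1"
    by (simp add: card_PiE)
  moreover have f: "finite (PiE {..<n1} (\<lambda>_. S))" using S by (simp add: finite_PiE)
  ultimately show ?thesis unfolding Gb_def by (rule img_card)
qed

lemma grid_fin: "finite S \<Longrightarrow> finite (grid ns S) \<and> card (grid ns S) \<le> card S ^ param_count ns"
proof (induction ns S rule: grid.induct)
  case (1 n0 n1 ns S)
  let ?X = "GA n0 n1 S \<times> Gb n1 S \<times> grid (n1 # ns) S"
  have f: "finite ?X" using 1 GA_fin Gb_fin by auto
  have "card ?X = card (GA n0 n1 S) * (card (Gb n1 S) * card (grid (n1 # ns) S))"
    by (simp add: card_cartesian_product)
  also have "\<dots> \<le> card S ^ (n1 * n0) * (card S ^ n1 * card S ^ param_count (n1 # ns))"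
    using 1 GA_fin Gb_fin by (intro mult_mono) auto
  also have "\<dots> = card S ^ param_count (n0 # n1 # ns)"
    by (simp add: param_count_Cons power_add algebra_simps)
  finally have "card ?X \<le> card S ^ param_count (n0 # n1 # ns)" .
  then show ?case using f card_image_le[OF f, of "\<lambda>(A, b, ps). (A, b) # ps"] by simp
qed (auto simp: param_count_def)

lemma grid_bounded: "S \<subseteq> {-R..R} \<Longrightarrow> \<theta> \<in> grid ns S \<Longrightarrow> param_bounded ns R \<theta>"
proof (induction ns S arbitrary: \<theta> rule: grid.induct)
  case (1 n0 n1 ns S)
  then obtain A b ps where th: "\<theta> = (A, b) # ps" "A \<in> GA n0 n1 S" "b \<in> Gb n1 S" "ps \<in> grid (n1 # ns) S"
    by auto
  have "\<forall>j<n1. \<bar>b j\<bar> \<le> R \<and> (\<forall>k<n0. \<bar>A j k\<bar> \<le> R)"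
  proof (intro allI impI conjI)
    fix j k assume j: "j < n1"
    from th(3) obtain g where g: "g \<in> PiE {..<n1} (\<lambda>_. S)" "b = (\<lambda>j. if j < n1 then g j else 0)"
      unfolding Gb_def by auto
    then show "\<bar>b j\<bar> \<le> R" using j 1(2) by (force simp: PiE_iff abs_le_iff)
    assume k: "k < n0"
    from th(2) obtain h where h: "h \<in> PiE ({..<n1} \<times> {..<n0}) (\<lambda>_. S)" "A = (\<lambda>j k. if j < n1 \<and> k < n0 then h (j, k) else 0)"
      unfolding GA_def by auto
    then show "\<bar>A j k\<bar> \<le> R" using j k 1(2) by (force simp: PiE_iff abs_le_iff)
  qed
  then show ?case using 1 th by (simp add: param_bounded_Cons)
qed (auto simp: param_bounded_def)

lemma grid_approx:
  assumes "\<And>x. \<bar>x\<bar> \<le> R \<Longrightarrow> rnd x \<in> S \<and> \<bar>x - rnd x\<bar> \<le> \<delta>"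
  shows "param_bounded ns R \<theta> \<Longrightarrow> \<exists>\<theta>'\<in>grid ns S. pclose ns \<delta> \<theta> \<theta>'"
proof (induction ns arbitrary: \<theta> rule: induct_list012)
  case (3 n0 n1 ns)
  then obtain A b ps where th: "\<theta> = (A, b) # ps"
    by (cases \<theta>) (auto simp: param_bounded_def)
  have pb: "\<forall>j<n1. \<bar>b j\<bar> \<le> R \<and> (\<forall>k<n0. \<bar>A j k\<bar> \<le> R)" "param_bounded (n1 # ns) R ps"
    using 3(3) unfolding th param_bounded_Cons by auto
  obtain ps' where ps': "ps' \<in> grid (n1 # ns) S" "pclose (n1 # ns) \<delta> ps ps'"
    using 3(2)[OF pb(2)] by auto
  define A' where "A' = (\<lambda>j k. if j < n1 \<and> k < n0 then rnd (A j k) else 0)"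
  define b' where "b' = (\<lambda>j. if j < n1 then rnd (b j) else 0)"
  have A'G: "A' \<in> GA n0 n1 S"
  proof -
    let ?g = "restrict (\<lambda>(j, k). rnd (A j k)) ({..<n1} \<times> {..<n0})"
    have "?g \<in> PiE ({..<n1} \<times> {..<n0}) (\<lambda>_. S)" using pb(1) assms by auto
    moreover have "A' = (\<lambda>j k. if j < n1 \<and> k < n0 then ?g (j, k) else 0)"
      unfolding A'_def by (auto intro!: ext)
    ultimately show ?thesis unfolding GA_def by blast
  qed
  have b'G: "b' \<in> Gb n1 S"
  proof -
    let ?g = "restrict (\<lambda>j. rnd (b j)) {..<n1}"
    have "?g \<in> PiE {..<n1} (\<lambda>_. S)" using pb(1) assms by auto
    moreover have "b' = (\<lambda>j. if j < n1 then ?g j else 0)"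
      unfolding b'_def by (auto intro!: ext)
    ultimately show ?thesis unfolding Gb_def by blast
  qed
  have "(A', b') # ps' \<in> grid (n0 # n1 # ns) S"
    unfolding grid.simps by (rule rev_image_eqI[of "(A', b', ps')"]) (use A'G b'G ps'(1) in auto)
  moreover have "pclose (n0 # n1 # ns) \<delta> \<theta> ((A', b') # ps')"
    unfolding th pclose_Cons
  proof (intro conjI allI impI)
    fix j k assume j: "j < n1"
    show "\<bar>b j - b' j\<bar> \<le> \<delta>" using j pb(1) assms unfolding b'_def by simp
    assume k: "k < n0"
    show "\<bar>A j k - A' j k\<bar> \<le> \<delta>" using j k pb(1) assms unfolding A'_def by simp
  qed (rule ps'(2))
  ultimately show ?case by blast
qed (auto simp: param_bounded_def pclose_def)


lemma clip_lip: "0 \<le> D \<Longrightarrow> \<bar>clip D a - clip D b\<bar> \<le> \<bar>a - b\<bar>"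
  unfolding clip_def by (auto simp: sgn_if min_def)

lemma clip_bound: "0 \<le> D \<Longrightarrow> \<bar>clip D a\<bar> \<le> D"
  unfolding clip_def by (auto simp: sgn_if min_def)

definition fnet :: "real \<Rightarrow> real \<Rightarrow> nat list \<Rightarrow> real \<Rightarrow> params \<Rightarrow> (nat \<Rightarrow> real) \<Rightarrow> real" where
  "fnet u v a D \<theta> = (\<lambda>x. if x \<in> cube u v (hd a) then clip D (realization a \<theta> x) else 0)"

lemma NN_class_eq: "NN_class u v a R D = {fnet u v a D \<theta> | \<theta>. param_bounded a R \<theta>}"
  unfolding NN_class_def fnet_def by simp

lemma fnet_bound: "0 \<le> D \<Longrightarrow> \<bar>fnet u v a D \<theta> x\<bar> \<le> D"
  unfolding fnet_def using clip_bound by auto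

lemma fnet_diff:
  assumes arch: "is_arch d a" and pb: "param_bounded a R \<theta>" "param_bounded a R \<theta>'"
    and pc: "pclose a \<delta> \<theta> \<theta>'" and D: "0 \<le> D" and \<delta>: "0 \<le> \<delta>"
  shows "\<bar>fnet u v a D \<theta> x - fnet u v a D \<theta>' x\<bar>
    \<le> \<delta> * (real (param_count a) * (max \<bar>u\<bar> \<bar>v\<bar> + 1) * (2 * max 1 R * real (param_count a)) ^ param_count a)"
proof -
  let ?P = "param_count a" and ?R1 = "max 1 R" and ?r0 = "max \<bar>u\<bar> \<bar>v\<bar>"
  have len: "2 \<le> length a" "hd a = d" using arch by (auto simp: is_arch_def)
  have pos: "\<forall>n\<in>set a. 1 \<le> n" using arch unfolding is_arch_def by (metis in_set_conv_nth)
  from param_count_facts[OF len(1) pos] have pf: "\<forall>n\<in>set a. n + 1 \<le> ?P" "length a - 1 \<le> ?P" by auto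
  have P1: "1 \<le> real ?P" using pf(1) len(1) by (cases a) auto
  have C0: "0 \<le> \<delta> * (real ?P * (?r0 + 1) * (2 * ?R1 * real ?P) ^ ?P)"
    using \<delta> P1 by (intro mult_nonneg_nonneg) auto
  show ?thesis
  proof (cases "x \<in> cube u v (hd a)")
    case False
    then show ?thesis using C0 by (simp add: fnet_def)
  next
    case True
    have pb1: "param_bounded a ?R1 \<theta>" "param_bounded a ?R1 \<theta>'"
      using pb by (auto intro: param_bounded_mono)
    have inp: "\<forall>k<hd a. \<bar>x k\<bar> \<le> ?r0 \<and> \<bar>x k - x k\<bar> \<le> 0"
      using True unfolding cube_def by auto
    have nd: "\<bar>net_eval a \<theta> x 0 - net_eval a \<theta>' x 0\<bar>
     \<le> (0 + real (length a - 1) * \<delta> * (?r0 + 1)) * (2 * ?R1 * real ?P) ^ (length a - 1)"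
      by (rule net_diff[OF pb1 pc len(1) _ inp]) (use pf \<delta> in auto)
    have b1: "1 \<le> 2 * ?R1 * real ?P" using P1 mult_mono[of 1 "2 * ?R1" 1 "real ?P"] by auto
    have "(0 + real (length a - 1) * \<delta> * (?r0 + 1)) * (2 * ?R1 * real ?P) ^ (length a - 1)
        \<le> (real ?P * \<delta> * (?r0 + 1)) * (2 * ?R1 * real ?P) ^ ?P"
    proof (intro mult_mono)
      show "0 + real (length a - 1) * \<delta> * (?r0 + 1) \<le> real ?P * \<delta> * (?r0 + 1)"
      proof -
        have "real (length a - 1) * \<delta> \<le> real ?P * \<delta>" using pf(2) \<delta> by (rule_tac mult_right_mono) auto
        then have "real (length a - 1) * \<delta> * (?r0 + 1) \<le> real ?P * \<delta> * (?r0 + 1)"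
          by (rule mult_right_mono) auto
        then show ?thesis by simp
      qed
      show "(2 * ?R1 * real ?P) ^ (length a - 1) \<le> (2 * ?R1 * real ?P) ^ ?P"
        using b1 pf(2) by (intro power_increasing) auto
    qed (use \<delta> P1 b1 in auto)
    then have "\<bar>net_eval a \<theta> x 0 - net_eval a \<theta>' x 0\<bar> \<le> \<delta> * (real ?P * (?r0 + 1) * (2 * ?R1 * real ?P) ^ ?P)"
      using nd by (simp add: algebra_simps)
    moreover have "\<bar>fnet u v a D \<theta> x - fnet u v a D \<theta>' x\<bar> \<le> \<bar>net_eval a \<theta> x 0 - net_eval a \<theta>' x 0\<bar>"
      using True clip_lip[OF D] by (simp add: fnet_def realization_def)
    ultimately show ?thesis by linarith
  qed
qed

definition rnd :: "real \<Rightarrow> real \<Rightarrow> real" where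
  "rnd \<delta> x = \<delta> * of_int (if x \<ge> 0 then \<lfloor>x / \<delta>\<rfloor> else \<lceil>x / \<delta>\<rceil>)"

definition Sgrid :: "real \<Rightarrow> real \<Rightarrow> real set" where
  "Sgrid \<delta> R = (\<lambda>k. \<delta> * of_int k) ` {-\<lfloor>R / \<delta>\<rfloor>..\<lfloor>R / \<delta>\<rfloor>}"

lemma rnd_props:
  assumes "0 < \<delta>" "\<bar>x\<bar> \<le> R"
  shows "rnd \<delta> x \<in> Sgrid \<delta> R \<and> \<bar>x - rnd \<delta> x\<bar> \<le> \<delta>"
proof -
  define k where "k = (if x \<ge> 0 then \<lfloor>x / \<delta>\<rfloor> else \<lceil>x / \<delta>\<rceil>)"
  have xR: "\<bar>x / \<delta>\<bar> \<le> R / \<delta>" using assms by (simp add: divide_right_mono abs_divide)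
  have kb0: "\<bar>real_of_int k\<bar> \<le> \<bar>x / \<delta>\<bar> \<and> \<bar>x / \<delta> - real_of_int k\<bar> \<le> 1"
  proof (cases "x \<ge> 0")
    case True
    then have "0 \<le> x / \<delta>" using assms by simp
    moreover have "of_int \<lfloor>x / \<delta>\<rfloor> \<le> x / \<delta>" "x / \<delta> < of_int \<lfloor>x / \<delta>\<rfloor> + 1"
      by (rule of_int_floor_le, rule real_of_int_floor_add_one_gt)
    moreover have "0 \<le> \<lfloor>x / \<delta>\<rfloor>" using calculation(1) by simp
    moreover have "k = \<lfloor>x / \<delta>\<rfloor>" unfolding k_def using True by simp
    ultimately have "-\<bar>x / \<delta>\<bar> \<le> real_of_int k \<and> real_of_int k \<le> \<bar>x / \<delta>\<bar> \<and> -1 \<le> x / \<delta> - real_of_int k \<and> x / \<delta> - real_of_int k \<le> 1"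
      by (simp only: abs_le_iff) linarith
    then show "\<bar>real_of_int k\<bar> \<le> \<bar>x / \<delta>\<bar> \<and> \<bar>x / \<delta> - real_of_int k\<bar> \<le> 1"
      by (simp only: abs_le_iff) auto
  next
    case False
    then have "x / \<delta> < 0" using assms by (simp add: divide_less_0_iff)
    moreover have "x / \<delta> \<le> of_int \<lceil>x / \<delta>\<rceil>" "of_int \<lceil>x / \<delta>\<rceil> < x / \<delta> + 1"
      by (rule le_of_int_ceiling, linarith)
    moreover have "\<lceil>x / \<delta>\<rceil> \<le> 0" using calculation(1) by (simp add: ceiling_le_iff)
    moreover have "k = \<lceil>x / \<delta>\<rceil>" unfolding k_def using False by simp
    ultimately have "-\<bar>x / \<delta>\<bar> \<le> real_of_int k \<and> real_of_int k \<le> \<bar>x / \<delta>\<bar> \<and> -1 \<le> x / \<delta> - real_of_int k \<and> x / \<delta> - real_of_int k \<le> 1"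
      by (simp only: abs_le_iff) linarith
    then show "\<bar>real_of_int k\<bar> \<le> \<bar>x / \<delta>\<bar> \<and> \<bar>x / \<delta> - real_of_int k\<bar> \<le> 1"
      by (simp only: abs_le_iff) auto
  qed
  have kb: "\<bar>real_of_int k\<bar> \<le> \<bar>x / \<delta>\<bar>" "\<bar>x / \<delta> - real_of_int k\<bar> \<le> 1" using kb0 by auto
  have "real_of_int \<bar>k\<bar> \<le> R / \<delta>" using kb(1) xR by simp
  then have "\<bar>k\<bar> \<le> \<lfloor>R / \<delta>\<rfloor>" by (simp add: le_floor_iff)
  then have "k \<in> {-\<lfloor>R / \<delta>\<rfloor>..\<lfloor>R / \<delta>\<rfloor>}" by auto
  then have "rnd \<delta> x \<in> Sgrid \<delta> R" unfolding rnd_def Sgrid_def k_def[symmetric] by blast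
  moreover have "\<bar>x - rnd \<delta> x\<bar> = \<delta> * \<bar>x / \<delta> - of_int k\<bar>"
  proof -
    have "x - \<delta> * real_of_int k = \<delta> * (x / \<delta> - real_of_int k)" using assms by (simp add: field_simps)
    then show ?thesis unfolding rnd_def k_def[symmetric] using assms by (simp add: abs_mult)
  qed
  then have "\<bar>x - rnd \<delta> x\<bar> \<le> \<delta>" using kb(2) assms by (simp add: mult_left_le)
  ultimately show ?thesis by blast
qed

lemma Sgrid_props:
  assumes "0 < \<delta>" "0 \<le> R"
  shows "Sgrid \<delta> R \<subseteq> {-R..R}" "finite (Sgrid \<delta> R)" "real (card (Sgrid \<delta> R)) \<le> 2 * R / \<delta> + 1"
proof -
  show "Sgrid \<delta> R \<subseteq> {-R..R}"
  proof
    fix s assume "s \<in> Sgrid \<delta> R"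
    then have "\<exists>k. s = \<delta> * of_int k \<and> -\<lfloor>R / \<delta>\<rfloor> \<le> k \<and> k \<le> \<lfloor>R / \<delta>\<rfloor>" unfolding Sgrid_def by auto
    then obtain k where k0: "s = \<delta> * of_int k" "-\<lfloor>R / \<delta>\<rfloor> \<le> k" "k \<le> \<lfloor>R / \<delta>\<rfloor>" by blast
    then have k: "s = \<delta> * of_int k" "\<bar>k\<bar> \<le> \<lfloor>R / \<delta>\<rfloor>" by auto
    have "real_of_int \<bar>k\<bar> \<le> real_of_int \<lfloor>R / \<delta>\<rfloor>" using k(2) by (simp only: of_int_le_iff)
    then have "\<bar>real_of_int k\<bar> \<le> R / \<delta>" using of_int_floor_le[of "R / \<delta>"] by linarith
    then have "\<bar>s\<bar> \<le> R" using assms unfolding k(1) by (simp add: abs_mult field_simps)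
    then show "s \<in> {-R..R}" by auto
  qed
  show "finite (Sgrid \<delta> R)" unfolding Sgrid_def by simp
  have "card (Sgrid \<delta> R) \<le> card {-\<lfloor>R / \<delta>\<rfloor>..\<lfloor>R / \<delta>\<rfloor>}" unfolding Sgrid_def by (rule card_image_le) simp
  also have "\<dots> = nat (2 * \<lfloor>R / \<delta>\<rfloor> + 1)" by simp
  finally have "real (card (Sgrid \<delta> R)) \<le> real (nat (2 * \<lfloor>R / \<delta>\<rfloor> + 1))" by simp
  also have "\<dots> = 2 * real_of_int \<lfloor>R / \<delta>\<rfloor> + 1" using assms by simp
  also have "\<dots> \<le> 2 * (R / \<delta>) + 1" using of_int_floor_le[of "R / \<delta>"] by linarith
  finally show "real (card (Sgrid \<delta> R)) \<le> 2 * R / \<delta> + 1" by (simp add: field_simps)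
qed


lemma comp_meas: "(\<lambda>x. x k) \<in> borel_measurable (vec_space d)"
proof (cases "k < d")
  case True
  then show ?thesis unfolding vec_space_def by (intro measurable_component_singleton) auto
next
  case False
  have "(\<lambda>x. x k) \<in> borel_measurable (vec_space d) \<longleftrightarrow> (\<lambda>x. undefined :: real) \<in> borel_measurable (vec_space d)"
    by (rule measurable_cong) (use False in \<open>auto simp: vec_space_def space_PiM PiE_def extensional_def\<close>)
  then show ?thesis by simp
qed

lemma affine_meas:
  assumes "\<And>k. (\<lambda>x. g x k) \<in> borel_measurable N"
  shows "(\<lambda>x. affine n0 n1 A b (g x) j) \<in> borel_measurable N"
  unfolding affine_def using assms by measurable

lemma net_meas:
  "(\<And>k. (\<lambda>x. g x k) \<in> borel_measurable N) \<Longrightarrow> (\<lambda>x. net_eval ns \<theta> (g x) j) \<in> borel_measurable N"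
proof (induction \<theta> arbitrary: ns g j)
  case Nil
  then show ?case by (cases ns rule: remdups_adj.cases) auto
next
  case (Cons p ps)
  obtain A b where p: "p = (A, b)" by force
  show ?case
  proof (cases ns rule: remdups_adj.cases)
    case (3 n0 n1 rest)
    show ?thesis
    proof (cases "rest = []")
      case True
      then show ?thesis using affine_meas[OF Cons.prems] 3 p by simp
    next
      case False
      have "(\<lambda>x. net_eval (n1 # rest) ps (relu_vec (affine n0 n1 A b (g x))) j) \<in> borel_measurable N"
      proof (rule Cons.IH)
        fix k show "(\<lambda>x. relu_vec (affine n0 n1 A b (g x)) k) \<in> borel_measurable N"
          unfolding relu_vec_def using affine_meas[OF Cons.prems] by measurable
      qed
      then show ?thesis using False 3 p by simp
    qed
  qed (use Cons.prems in auto)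
qed

lemma fnet_meas: "fnet u v a D \<theta> \<in> borel_measurable (vec_space d)"
proof -
  have r: "(\<lambda>x. realization a \<theta> x) \<in> borel_measurable (vec_space d)"
    unfolding realization_def using net_meas[of "\<lambda>x. x", OF comp_meas] by simp
  have c: "(\<lambda>x. clip D (realization a \<theta> x)) \<in> borel_measurable (vec_space d)"
    unfolding clip_def using r by measurable
  have p: "{x \<in> space (vec_space d). x \<in> cube u v (hd a)} \<in> sets (vec_space d)"
  proof -
    have "{x \<in> space (vec_space d). x \<in> cube u v (hd a)} = {x \<in> space (vec_space d). \<forall>i\<in>{..<hd a}. u \<le> x i \<and> x i \<le> v}"
      unfolding cube_def by auto
    also have "\<dots> \<in> sets (vec_space d)" using comp_meas by measurable
    finally show ?thesis .
  qed
  show ?thesis unfolding fnet_def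
    by (rule measurable_If[OF c borel_measurable_const p])
qed

lemma trunc_eq: "1 \<le> d \<Longrightarrow> trunc d K \<phi> y = (if (\<forall>i<d. \<bar>y i\<bar> \<le> K) then \<phi> y else 0)"
proof -
  assume d: "1 \<le> d"
  have "norm_inf d y \<le> K \<longleftrightarrow> (\<forall>i<d. \<bar>y i\<bar> \<le> K)"
    unfolding norm_inf_def using d by (subst Max_le_iff) (auto simp: lessThan_empty_iff)
  then show ?thesis unfolding trunc_def by simp
qed

lemma trunc_meas:
  assumes "1 \<le> d" "\<phi> \<in> borel_measurable (vec_space d)"
  shows "trunc d K \<phi> \<in> borel_measurable (vec_space d)"
proof -
  have p0: "{x \<in> space (vec_space d). \<forall>i\<in>{..<d}. \<bar>x i\<bar> \<le> K} \<in> sets (vec_space d)"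
    using comp_meas by measurable
  have "{x \<in> space (vec_space d). \<forall>i<d. \<bar>x i\<bar> \<le> K} = {x \<in> space (vec_space d). \<forall>i\<in>{..<d}. \<bar>x i\<bar> \<le> K}"
    by auto
  with p0 have p: "{x \<in> space (vec_space d). \<forall>i<d. \<bar>x i\<bar> \<le> K} \<in> sets (vec_space d)" by simp
  have "(\<lambda>y. if (\<forall>i<d. \<bar>y i\<bar> \<le> K) then \<phi> y else 0) \<in> borel_measurable (vec_space d)"
    by (rule measurable_If[OF assms(2) borel_measurable_const p])
  moreover have "trunc d K \<phi> = (\<lambda>y. if (\<forall>i<d. \<bar>y i\<bar> \<le> K) then \<phi> y else 0)"
    using trunc_eq[OF assms(1)] by (intro ext) simp
  ultimately show ?thesis by simp
qed


lemma hoeff_one: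
  fixes M :: "'w measure" and X Y :: "'w \<Rightarrow> nat \<Rightarrow> real" and xs ys :: "nat \<Rightarrow> 'w \<Rightarrow> nat \<Rightarrow> real"
    and V :: "(nat \<Rightarrow> real) measure"
  assumes P: "prob_space M"
    and XY: "(\<lambda>\<omega>. (X \<omega>, Y \<omega>)) \<in> measurable M (V \<Otimes>\<^sub>M V)"
    and sm: "\<And>i. (\<lambda>\<omega>. (xs i \<omega>, ys i \<omega>)) \<in> measurable M (V \<Otimes>\<^sub>M V)"
    and ind: "prob_space.indep_vars M (\<lambda>_. V \<Otimes>\<^sub>M V) (\<lambda>i \<omega>. (xs i \<omega>, ys i \<omega>)) UNIV"
    and dis: "\<And>i. distr M (V \<Otimes>\<^sub>M V) (\<lambda>\<omega>. (xs i \<omega>, ys i \<omega>)) = distr M (V \<Otimes>\<^sub>M V) (\<lambda>\<omega>. (X \<omega>, Y \<omega>))"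
    and fm: "f \<in> borel_measurable V" and tm: "t \<in> borel_measurable V"
    and fb: "\<And>x. \<bar>f x\<bar> \<le> D" and tb: "\<And>y. \<bar>t y\<bar> \<le> B" and D: "0 < D" and B: "0 \<le> B"
    and m: "0 < m" and s: "0 \<le> s"
  shows "measure M {\<omega> \<in> space M. s \<le> \<bar>(\<integral>\<omega>'. (f (X \<omega>') - t (Y \<omega>'))\<^sup>2 \<partial>M)
            - (1 / real m) * (\<Sum>i\<in>{1..m}. (f (xs i \<omega>) - t (ys i \<omega>))\<^sup>2)\<bar>}
     \<le> 2 * exp (- 2 * real m * s\<^sup>2 / ((D + B)\<^sup>2)\<^sup>2)"
proof -
  interpret prob_space M by (rule P)
  define g where "g = (\<lambda>p::(nat \<Rightarrow> real) \<times> (nat \<Rightarrow> real). (f (fst p) - t (snd p))\<^sup>2)"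
  have gm: "g \<in> borel_measurable (V \<Otimes>\<^sub>M V)" unfolding g_def using fm tm by measurable
  have gb: "\<And>p. g p \<in> {0..(D + B)\<^sup>2}"
  proof -
    fix p
    have "\<bar>f (fst p) - t (snd p)\<bar> \<le> D + B" using fb[of "fst p"] tb[of "snd p"] by linarith
    then have "(f (fst p) - t (snd p))\<^sup>2 \<le> (D + B)\<^sup>2"
      by (metis abs_le_square_iff abs_of_nonneg add_nonneg_nonneg B D less_imp_le)
    then show "g p \<in> {0..(D + B)\<^sup>2}" unfolding g_def by simp
  qed
  define Z where "Z = (\<lambda>i \<omega>. g (xs i \<omega>, ys i \<omega>))"
  define Z0 where "Z0 = (\<lambda>\<omega>. g (X \<omega>, Y \<omega>))"
  have Z0m: "random_variable borel Z0" unfolding Z0_def using gm XY by measurable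
  have indZ: "indep_vars (\<lambda>_. borel) Z {1..m}"
  proof -
    have "indep_vars (\<lambda>_. borel) (\<lambda>i \<omega>. g (xs i \<omega>, ys i \<omega>)) UNIV"
      by (rule indep_vars_compose2[OF ind]) (rule gm)
    then show ?thesis unfolding Z_def by (rule indep_vars_subset) auto
  qed
  have disZ: "\<And>i. distr M borel (Z i) = distr M borel Z0"
  proof -
    fix i
    have "distr M borel (Z i) = distr (distr M (V \<Otimes>\<^sub>M V) (\<lambda>\<omega>. (xs i \<omega>, ys i \<omega>))) borel g"
      unfolding Z_def by (subst distr_distr[OF gm sm]) (simp add: comp_def)
    also have "\<dots> = distr (distr M (V \<Otimes>\<^sub>M V) (\<lambda>\<omega>. (X \<omega>, Y \<omega>))) borel g" by (simp add: dis)
    also have "\<dots> = distr M borel Z0"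
      unfolding Z0_def by (subst distr_distr[OF gm XY]) (simp add: comp_def)
    finally show "distr M borel (Z i) = distr M borel Z0" .
  qed
  have DB: "0 < (D + B)\<^sup>2" using D B by simp
  interpret H: Hoeffding_ineq_iid M "{1..m}" Z Z0 0 "(D + B)\<^sup>2" "expectation Z0"
    by unfold_locales (use indZ disZ Z0m gb in \<open>auto simp: Z0_def\<close>)
  have hf: "prob {x \<in> space M. \<bar>(\<Sum>i\<in>{1..m}. Z i x) / real (card {1..m}) - expectation Z0\<bar> \<ge> s}
      \<le> 2 * exp (-2 * real (card {1..m}) * s\<^sup>2 / ((D + B)\<^sup>2 - 0)\<^sup>2)"
    by (rule H.Hoeffding_ineq_abs_ge'[OF s DB]) (use m in auto)
  have eqset: "{\<omega> \<in> space M. s \<le> \<bar>(\<integral>\<omega>'. (f (X \<omega>') - t (Y \<omega>'))\<^sup>2 \<partial>M)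
            - (1 / real m) * (\<Sum>i\<in>{1..m}. (f (xs i \<omega>) - t (ys i \<omega>))\<^sup>2)\<bar>}
     = {x \<in> space M. \<bar>(\<Sum>i\<in>{1..m}. Z i x) / real (card {1..m}) - expectation Z0\<bar> \<ge> s}"
    unfolding Z_def Z0_def g_def by (auto simp: abs_minus_commute)
  show ?thesis using hf unfolding eqset by simp
qed


lemma sq_diff_bound:
  fixes a b c :: real
  assumes "\<bar>a\<bar> \<le> D" "\<bar>b\<bar> \<le> D" "\<bar>c\<bar> \<le> B" "\<bar>a - b\<bar> \<le> \<eta>"
  shows "\<bar>(a - c)\<^sup>2 - (b - c)\<^sup>2\<bar> \<le> 2 * (D + B) * \<eta>"
proof -
  have "(a - c)\<^sup>2 - (b - c)\<^sup>2 = (a - b) * (a + b - 2 * c)" by (simp add: power2_eq_square algebra_simps)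
  then have "\<bar>(a - c)\<^sup>2 - (b - c)\<^sup>2\<bar> = \<bar>a - b\<bar> * \<bar>a + b - 2 * c\<bar>" by (simp add: abs_mult)
  also have "\<dots> \<le> \<eta> * (2 * (D + B))"
    using assms by (intro mult_mono) auto
  finally show ?thesis by (simp add: algebra_simps)
qed

lemma abs_scale: "0 \<le> (k::real) \<Longrightarrow> \<bar>k * a - k * b\<bar> = k * \<bar>a - b\<bar>"
proof -
  assume k: "0 \<le> k"
  have "k * a - k * b = k * (a - b)" by (simp add: algebra_simps)
  then show ?thesis using k by (simp add: abs_mult)
qed

lemma delta_lip:
  fixes M :: "'w measure" and X Y :: "'w \<Rightarrow> nat \<Rightarrow> real" and xs ys :: "nat \<Rightarrow> 'w \<Rightarrow> nat \<Rightarrow> real"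
    and V :: "(nat \<Rightarrow> real) measure"
  assumes P: "prob_space M"
    and Xm: "X \<in> measurable M V" and Ym: "Y \<in> measurable M V"
    and fm: "f \<in> borel_measurable V" and gm: "g \<in> borel_measurable V" and tm: "t \<in> borel_measurable V"
    and fb: "\<And>x. \<bar>f x\<bar> \<le> D" and gb: "\<And>x. \<bar>g x\<bar> \<le> D" and tb: "\<And>y. \<bar>t y\<bar> \<le> B"
    and fg: "\<And>x. \<bar>f x - g x\<bar> \<le> \<eta>" and m: "0 < m"
  shows "\<bar>\<bar>(\<integral>\<omega>'. (f (X \<omega>') - t (Y \<omega>'))\<^sup>2 \<partial>M) - (1 / real m) * (\<Sum>i\<in>{1..m}. (f (xs i \<omega>) - t (ys i \<omega>))\<^sup>2)\<bar>
     - \<bar>(\<integral>\<omega>'. (g (X \<omega>') - t (Y \<omega>'))\<^sup>2 \<partial>M) - (1 / real m) * (\<Sum>i\<in>{1..m}. (g (xs i \<omega>) - t (ys i \<omega>))\<^sup>2)\<bar>\<bar>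
     \<le> 4 * (D + B) * \<eta>"
proof -
  interpret prob_space M by (rule P)
  let ?c = "2 * (D + B) * \<eta>"
  have pw: "\<And>x y. \<bar>(f x - t y)\<^sup>2 - (g x - t y)\<^sup>2\<bar> \<le> ?c"
    using sq_diff_bound fb gb tb fg by blast
  define F where "F = (\<lambda>\<omega>. (f (X \<omega>) - t (Y \<omega>))\<^sup>2)"
  define G where "G = (\<lambda>\<omega>. (g (X \<omega>) - t (Y \<omega>))\<^sup>2)"
  have Fm: "F \<in> borel_measurable M" unfolding F_def using fm tm Xm Ym by measurable
  have Gm: "G \<in> borel_measurable M" unfolding G_def using gm tm Xm Ym by measurable
  have bF: "\<And>\<omega>. norm (F \<omega>) \<le> (D + B)\<^sup>2"
  proof -
    fix \<omega>
    have "\<bar>f (X \<omega>) - t (Y \<omega>)\<bar> \<le> D + B" using fb[of "X \<omega>"] tb[of "Y \<omega>"] by linarith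
    then show "norm (F \<omega>) \<le> (D + B)\<^sup>2" unfolding F_def
      by (simp add: abs_le_square_iff power2_le_iff_abs_le order_trans[OF abs_ge_zero])
  qed
  have bG: "\<And>\<omega>. norm (G \<omega>) \<le> (D + B)\<^sup>2"
  proof -
    fix \<omega>
    have "\<bar>g (X \<omega>) - t (Y \<omega>)\<bar> \<le> D + B" using gb[of "X \<omega>"] tb[of "Y \<omega>"] by linarith
    then show "norm (G \<omega>) \<le> (D + B)\<^sup>2" unfolding G_def
      by (simp add: abs_le_square_iff power2_le_iff_abs_le order_trans[OF abs_ge_zero])
  qed
  have iF: "integrable M F" by (rule integrable_const_bound[OF _ Fm]) (use bF in auto)
  have iG: "integrable M G" by (rule integrable_const_bound[OF _ Gm]) (use bG in auto)
  have i1: "integral\<^sup>L M F \<le> integral\<^sup>L M G + ?c"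
  proof -
    have "integral\<^sup>L M F \<le> integral\<^sup>L M (\<lambda>\<omega>. G \<omega> + ?c)"
    proof (rule integral_mono[OF iF])
      show "integrable M (\<lambda>\<omega>. G \<omega> + ?c)" using iG by simp
      fix \<omega> show "F \<omega> \<le> G \<omega> + ?c" using pw[of "X \<omega>" "Y \<omega>"] unfolding F_def G_def abs_le_iff by linarith
    qed
    also have "\<dots> = integral\<^sup>L M G + ?c" using iG by (simp add: prob_space)
    finally show ?thesis .
  qed
  have i2: "integral\<^sup>L M G \<le> integral\<^sup>L M F + ?c"
  proof -
    have "integral\<^sup>L M G \<le> integral\<^sup>L M (\<lambda>\<omega>. F \<omega> + ?c)"
    proof (rule integral_mono[OF iG])
      show "integrable M (\<lambda>\<omega>. F \<omega> + ?c)" using iF by simp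
      fix \<omega> show "G \<omega> \<le> F \<omega> + ?c" using pw[of "X \<omega>" "Y \<omega>"] unfolding F_def G_def abs_le_iff by linarith
    qed
    also have "\<dots> = integral\<^sup>L M F + ?c" using iF by (simp add: prob_space)
    finally show ?thesis .
  qed
  have e1: "\<bar>(\<Sum>i\<in>{1..m}. (f (xs i \<omega>) - t (ys i \<omega>))\<^sup>2) - (\<Sum>i\<in>{1..m}. (g (xs i \<omega>) - t (ys i \<omega>))\<^sup>2)\<bar>
      \<le> real m * ?c"
  proof -
    have "\<bar>(\<Sum>i\<in>{1..m}. (f (xs i \<omega>) - t (ys i \<omega>))\<^sup>2) - (\<Sum>i\<in>{1..m}. (g (xs i \<omega>) - t (ys i \<omega>))\<^sup>2)\<bar>
       = \<bar>\<Sum>i\<in>{1..m}. (f (xs i \<omega>) - t (ys i \<omega>))\<^sup>2 - (g (xs i \<omega>) - t (ys i \<omega>))\<^sup>2\<bar>"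
      by (simp add: sum_subtractf)
    also have "\<dots> \<le> (\<Sum>i\<in>{1..m}. \<bar>(f (xs i \<omega>) - t (ys i \<omega>))\<^sup>2 - (g (xs i \<omega>) - t (ys i \<omega>))\<^sup>2\<bar>)"
      by (rule sum_abs)
    also have "\<dots> \<le> (\<Sum>i\<in>{1..m}. ?c)" by (intro sum_mono pw)
    also have "\<dots> = real m * ?c" by simp
    finally show ?thesis .
  qed
  have e2: "\<bar>(1 / real m) * (\<Sum>i\<in>{1..m}. (f (xs i \<omega>) - t (ys i \<omega>))\<^sup>2) - (1 / real m) * (\<Sum>i\<in>{1..m}. (g (xs i \<omega>) - t (ys i \<omega>))\<^sup>2)\<bar>
      \<le> ?c"
  proof -
    have "\<bar>(1 / real m) * (\<Sum>i\<in>{1..m}. (f (xs i \<omega>) - t (ys i \<omega>))\<^sup>2) - (1 / real m) * (\<Sum>i\<in>{1..m}. (g (xs i \<omega>) - t (ys i \<omega>))\<^sup>2)\<bar>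
      = (1 / real m) * \<bar>(\<Sum>i\<in>{1..m}. (f (xs i \<omega>) - t (ys i \<omega>))\<^sup>2) - (\<Sum>i\<in>{1..m}. (g (xs i \<omega>) - t (ys i \<omega>))\<^sup>2)\<bar>"
      by (rule abs_scale) simp
    also have "\<dots> \<le> (1 / real m) * (real m * ?c)" using e1 by (intro mult_left_mono) auto
    also have "\<dots> = ?c" using m by simp
    finally show ?thesis .
  qed
  have "\<bar>integral\<^sup>L M F - integral\<^sup>L M G\<bar> \<le> ?c" using i1 i2 by linarith
  then show ?thesis using e2 unfolding F_def G_def by linarith
qed


lemma le_of_all_eps:
  fixes x e c :: real
  assumes "\<And>n::nat. x \<le> e + c / real (Suc n)" "0 \<le> c"
  shows "x \<le> e"
proof (rule ccontr)
  assume "\<not> x \<le> e"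
  then have pos: "0 < x - e" by simp
  obtain n :: nat where n: "c / (x - e) < real n" using reals_Archimedean2 by blast
  have "c < real n * (x - e)" using n pos by (simp add: field_simps)
  also have "\<dots> \<le> real (Suc n) * (x - e)" using pos by (intro mult_right_mono) auto
  finally have "c / real (Suc n) < x - e" by (simp add: field_simps)
  then show False using assms(1)[of n] by linarith
qed

lemma main_fixed:
  fixes M :: "'w measure" and X Y :: "'w \<Rightarrow> nat \<Rightarrow> real" and xs ys :: "nat \<Rightarrow> 'w \<Rightarrow> nat \<Rightarrow> real"
    and t :: "(nat \<Rightarrow> real) \<Rightarrow> real" and d :: nat
  defines "V \<equiv> vec_space d"
  assumes P: "prob_space M"
    and Xm: "X \<in> measurable M V" and Ym: "Y \<in> measurable M V"
    and sm: "\<And>i. (\<lambda>\<omega>. (xs i \<omega>, ys i \<omega>)) \<in> measurable M (V \<Otimes>\<^sub>M V)"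
    and ind: "prob_space.indep_vars M (\<lambda>_. V \<Otimes>\<^sub>M V) (\<lambda>i \<omega>. (xs i \<omega>, ys i \<omega>)) UNIV"
    and dis: "\<And>i. distr M (V \<Otimes>\<^sub>M V) (\<lambda>\<omega>. (xs i \<omega>, ys i \<omega>)) = distr M (V \<Otimes>\<^sub>M V) (\<lambda>\<omega>. (X \<omega>, Y \<omega>))"
    and tm: "t \<in> borel_measurable V" and tb: "\<And>y. \<bar>t y\<bar> \<le> B" and B: "0 \<le> B"
    and arch: "is_arch d a" and R: "0 < R" and D: "1 \<le> D" and \<epsilon>: "0 < \<epsilon>" and m: "0 < m"
    and num: "2 * (2 * R / (\<epsilon> / (8 * (D + B) * (real (param_count a) * (max \<bar>u\<bar> \<bar>v\<bar> + 1) *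
                 (2 * max 1 R * real (param_count a)) ^ param_count a))) + 1) ^ param_count a
              * exp (- 2 * real m * (\<epsilon> / 2)\<^sup>2 / ((D + B)\<^sup>2)\<^sup>2) \<le> \<rho>"
  shows "measure M {\<omega> \<in> space M. \<forall>f \<in> NN_class u v a R D.
          \<bar>(\<integral>\<omega>'. (f (X \<omega>') - t (Y \<omega>'))\<^sup>2 \<partial>M)
           - (1 / real m) * (\<Sum>i\<in>{1..m}. (f (xs i \<omega>) - t (ys i \<omega>))\<^sup>2)\<bar> \<le> \<epsilon>} \<ge> 1 - \<rho>"
proof -
  interpret prob_space M by (rule P)
  define PP where "PP = param_count a"
  define C where "C = real PP * (max \<bar>u\<bar> \<bar>v\<bar> + 1) * (2 * max 1 R * real PP) ^ PP"
  define Dl where "Dl = (\<lambda>\<theta> \<omega>. \<bar>(\<integral>\<omega>'. (fnet u v a D \<theta> (X \<omega>') - t (Y \<omega>'))\<^sup>2 \<partial>M)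
           - (1 / real m) * (\<Sum>i\<in>{1..m}. (fnet u v a D \<theta> (xs i \<omega>) - t (ys i \<omega>))\<^sup>2)\<bar>)"
  define Gr where "Gr = (\<lambda>\<delta>. grid a (Sgrid \<delta> R))"
  have len: "2 \<le> length a" "hd a = d" using arch by (auto simp: is_arch_def)
  have pos: "\<forall>n\<in>set a. 1 \<le> n" using arch unfolding is_arch_def by (metis in_set_conv_nth)
  from param_count_facts[OF len(1) pos] have "\<forall>n\<in>set a. n + 1 \<le> PP" unfolding PP_def by auto
  then have P1: "1 \<le> real PP" using len(1) by (cases a) auto
  have C0: "0 < C" unfolding C_def using P1 by (intro mult_pos_pos zero_less_power) auto
  have DB: "0 < D + B" using D B by simp
  have xsm: "\<And>i. xs i \<in> measurable M V" using measurable_compose[OF sm measurable_fst] by (simp add: comp_def)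
  have ysm: "\<And>i. ys i \<in> measurable M V" using measurable_compose[OF sm measurable_snd] by (simp add: comp_def)
  have fm: "\<And>\<theta>. fnet u v a D \<theta> \<in> borel_measurable V" unfolding V_def by (rule fnet_meas)
  have fb: "\<And>\<theta> x. \<bar>fnet u v a D \<theta> x\<bar> \<le> D" using D by (intro fnet_bound) auto
  have Dlm: "\<And>\<theta>. Dl \<theta> \<in> borel_measurable M"
  proof -
    fix \<theta>
    have "\<And>i. (\<lambda>\<omega>. (fnet u v a D \<theta> (xs i \<omega>) - t (ys i \<omega>))\<^sup>2) \<in> borel_measurable M"
      using measurable_compose[OF xsm fm] measurable_compose[OF ysm tm] by measurable
    then show "Dl \<theta> \<in> borel_measurable M" unfolding Dl_def by measurable
  qed
  have lip: "\<And>\<theta> \<theta>' \<delta> \<omega>. param_bounded a R \<theta> \<Longrightarrow> param_bounded a R \<theta>' \<Longrightarrow> pclose a \<delta> \<theta> \<theta>' \<Longrightarrow> 0 \<le> \<delta> \<Longrightarrow>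
      \<bar>Dl \<theta> \<omega> - Dl \<theta>' \<omega>\<bar> \<le> 4 * (D + B) * (\<delta> * C)"
  proof -
    fix \<theta> \<theta>' \<delta> \<omega> assume a: "param_bounded a R \<theta>" "param_bounded a R \<theta>'" "pclose a \<delta> \<theta> \<theta>'" "0 \<le> \<delta>"
    have "\<And>x. \<bar>fnet u v a D \<theta> x - fnet u v a D \<theta>' x\<bar> \<le> \<delta> * C"
      using fnet_diff[OF arch a(1) a(2) a(3) _ a(4)] D unfolding C_def PP_def by auto
    then show "\<bar>Dl \<theta> \<omega> - Dl \<theta>' \<omega>\<bar> \<le> 4 * (D + B) * (\<delta> * C)"
      unfolding Dl_def by (rule delta_lip[OF P Xm Ym fm fm tm fb fb tb _ m])
  qed
  have grid_props: "\<And>\<delta>. 0 < \<delta> \<Longrightarrow> finite (Gr \<delta>) \<and> real (card (Gr \<delta>)) \<le> (2 * R / \<delta> + 1) ^ PP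
      \<and> (\<forall>\<theta>\<in>Gr \<delta>. param_bounded a R \<theta>) \<and> (\<forall>\<theta>. param_bounded a R \<theta> \<longrightarrow> (\<exists>\<theta>'\<in>Gr \<delta>. pclose a \<delta> \<theta> \<theta>'))"
  proof -
    fix \<delta> :: real assume \<delta>: "0 < \<delta>"
    note S = Sgrid_props[OF \<delta>, of R]
    have gf: "finite (Gr \<delta>) \<and> card (Gr \<delta>) \<le> card (Sgrid \<delta> R) ^ PP"
      unfolding Gr_def PP_def using grid_fin S R by auto
    have "real (card (Gr \<delta>)) \<le> real (card (Sgrid \<delta> R)) ^ PP"
      using gf by (metis of_nat_le_iff of_nat_power)
    also have "\<dots> \<le> (2 * R / \<delta> + 1) ^ PP" using S R by (intro power_mono) auto
    finally have c: "real (card (Gr \<delta>)) \<le> (2 * R / \<delta> + 1) ^ PP" .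
    have b: "\<forall>\<theta>\<in>Gr \<delta>. param_bounded a R \<theta>" unfolding Gr_def using grid_bounded S R by auto
    have ap: "\<forall>\<theta>. param_bounded a R \<theta> \<longrightarrow> (\<exists>\<theta>'\<in>Gr \<delta>. pclose a \<delta> \<theta> \<theta>')"
      unfolding Gr_def using grid_approx[of R "rnd \<delta>" "Sgrid \<delta> R" \<delta>] rnd_props[OF \<delta>] by blast
    show "?thesis \<delta>" using gf c b ap by blast
  qed
  define E where "E = {\<omega> \<in> space M. \<forall>f \<in> NN_class u v a R D.
          \<bar>(\<integral>\<omega>'. (f (X \<omega>') - t (Y \<omega>'))\<^sup>2 \<partial>M)
           - (1 / real m) * (\<Sum>i\<in>{1..m}. (f (xs i \<omega>) - t (ys i \<omega>))\<^sup>2)\<bar> \<le> \<epsilon>}"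
  have E_alt: "E = {\<omega> \<in> space M. \<forall>\<theta>. param_bounded a R \<theta> \<longrightarrow> Dl \<theta> \<omega> \<le> \<epsilon>}"
    unfolding E_def NN_class_eq Dl_def by auto
  define dn where "dn = (\<lambda>n::nat. 1 / real (Suc n))"
  have dn: "\<And>n. 0 < dn n" unfolding dn_def by simp
  have E_eq: "E = {\<omega> \<in> space M. \<forall>n. \<forall>\<theta>\<in>Gr (dn n). Dl \<theta> \<omega> \<le> \<epsilon> + 4 * (D + B) * (dn n * C)}"
  proof (intro set_eqI iffI)
    fix \<omega> assume "\<omega> \<in> E"
    then have "\<omega> \<in> space M" "\<And>\<theta>. param_bounded a R \<theta> \<Longrightarrow> Dl \<theta> \<omega> \<le> \<epsilon>" unfolding E_alt by auto
    moreover have nn: "0 \<le> 4 * (D + B) * (dn n * C)" for n using DB C0 dn[of n] by simp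
    note facts = calculation
    have "\<forall>n. \<forall>\<theta>\<in>Gr (dn n). Dl \<theta> \<omega> \<le> \<epsilon> + 4 * (D + B) * (dn n * C)"
    proof (intro allI ballI)
      fix n \<theta> assume "\<theta> \<in> Gr (dn n)"
      then have "param_bounded a R \<theta>" using grid_props[OF dn[of n]] by blast
      then have "Dl \<theta> \<omega> \<le> \<epsilon>" using facts(2) by blast
      then show "Dl \<theta> \<omega> \<le> \<epsilon> + 4 * (D + B) * (dn n * C)" using nn[of n] by linarith
    qed
    then show "\<omega> \<in> {\<omega> \<in> space M. \<forall>n. \<forall>\<theta>\<in>Gr (dn n). Dl \<theta> \<omega> \<le> \<epsilon> + 4 * (D + B) * (dn n * C)}"
      using facts(1) by blast
  next
    fix \<omega> assume \<omega>: "\<omega> \<in> {\<omega> \<in> space M. \<forall>n. \<forall>\<theta>\<in>Gr (dn n). Dl \<theta> \<omega> \<le> \<epsilon> + 4 * (D + B) * (dn n * C)}"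
    have "Dl \<theta> \<omega> \<le> \<epsilon>" if th: "param_bounded a R \<theta>" for \<theta>
    proof (rule le_of_all_eps)
      fix n
      obtain \<theta>' where th': "\<theta>' \<in> Gr (dn n)" "pclose a (dn n) \<theta> \<theta>'" using grid_props[OF dn[of n]] th by blast
      have "param_bounded a R \<theta>'" using grid_props[OF dn[of n]] th' by blast
      then have "\<bar>Dl \<theta> \<omega> - Dl \<theta>' \<omega>\<bar> \<le> 4 * (D + B) * (dn n * C)" using lip th th' dn[of n] by auto
      moreover have "Dl \<theta>' \<omega> \<le> \<epsilon> + 4 * (D + B) * (dn n * C)" using \<omega> th' by auto
      ultimately have "Dl \<theta> \<omega> \<le> \<epsilon> + 8 * (D + B) * C * dn n" by (simp add: algebra_simps) 
      then show "Dl \<theta> \<omega> \<le> \<epsilon> + 8 * (D + B) * C / real (Suc n)" by (simp add: dn_def)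
    qed (use DB C0 in simp)
    then show "\<omega> \<in> E" unfolding E_alt using \<omega> by auto
  qed
  have E_meas: "E \<in> sets M"
  proof -
    have "Measurable.pred M (\<lambda>\<omega>. \<forall>n. \<forall>\<theta>\<in>Gr (dn n). Dl \<theta> \<omega> \<le> \<epsilon> + 4 * (D + B) * (dn n * C))"
    proof (intro pred_intros_countable(1) pred_intros_finite(3))
      fix n show "finite (Gr (dn n))" using grid_props[OF dn[of n]] by blast
      fix \<theta> show "Measurable.pred M (\<lambda>\<omega>. Dl \<theta> \<omega> \<le> \<epsilon> + 4 * (D + B) * (dn n * C))"
        using Dlm[of \<theta>] by measurable
    qed
    then show ?thesis unfolding E_eq pred_def .
  qed
  define \<delta>0 where "\<delta>0 = \<epsilon> / (8 * (D + B) * C)"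
  have \<delta>0: "0 < \<delta>0" unfolding \<delta>0_def using \<epsilon> DB C0 by simp
  have nz: "8 * (D + B) * C \<noteq> 0" using DB C0 by simp
  have l0: "\<delta>0 * (8 * (D + B) * C) = \<epsilon>" unfolding \<delta>0_def using nz by simp
  have "4 * (D + B) * (\<delta>0 * C) = (\<delta>0 * (8 * (D + B) * C)) / 2" by (simp add: algebra_simps)
  then have lip0: "4 * (D + B) * (\<delta>0 * C) = \<epsilon> / 2" by (simp only: l0)
  note G = grid_props[OF \<delta>0]
  define G0 where "G0 = {\<omega> \<in> space M. \<forall>\<theta>\<in>Gr \<delta>0. Dl \<theta> \<omega> < \<epsilon> / 2}"
  have G0E: "G0 \<subseteq> E"
  proof
    fix \<omega> assume \<omega>: "\<omega> \<in> G0"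
    have "Dl \<theta> \<omega> \<le> \<epsilon>" if th: "param_bounded a R \<theta>" for \<theta>
    proof -
      obtain \<theta>' where th': "\<theta>' \<in> Gr \<delta>0" "pclose a \<delta>0 \<theta> \<theta>'" using G th by blast
      have "param_bounded a R \<theta>'" using G th' by blast
      then have "\<bar>Dl \<theta> \<omega> - Dl \<theta>' \<omega>\<bar> \<le> \<epsilon> / 2" using lip[OF th _ th'(2)] \<delta>0 lip0 by auto
      moreover have "Dl \<theta>' \<omega> < \<epsilon> / 2" using \<omega> th' unfolding G0_def by auto
      ultimately show ?thesis by linarith
    qed
    then show "\<omega> \<in> E" unfolding E_alt using \<omega> unfolding G0_def by auto
  qed
  have compl: "space M - G0 = (\<Union>\<theta>\<in>Gr \<delta>0. {\<omega> \<in> space M. \<epsilon> / 2 \<le> Dl \<theta> \<omega>})"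
    unfolding G0_def by auto
  have sets_each: "\<And>\<theta>. {\<omega> \<in> space M. \<epsilon> / 2 \<le> Dl \<theta> \<omega>} \<in> sets M"
    using Dlm by measurable
  have hb: "\<And>\<theta>. measure M {\<omega> \<in> space M. \<epsilon> / 2 \<le> Dl \<theta> \<omega>} \<le> 2 * exp (- 2 * real m * (\<epsilon> / 2)\<^sup>2 / ((D + B)\<^sup>2)\<^sup>2)"
    unfolding Dl_def
    by (rule hoeff_one[OF P _ sm ind dis fm tm fb tb _ _ m]) (use Xm Ym D B \<epsilon> in \<open>auto intro: measurable_Pair\<close>)
  have "measure M (space M - G0) \<le> (\<Sum>\<theta>\<in>Gr \<delta>0. measure M {\<omega> \<in> space M. \<epsilon> / 2 \<le> Dl \<theta> \<omega>})"
    unfolding compl by (rule finite_measure_subadditive_finite) (use G sets_each in auto)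
  also have "\<dots> \<le> real (card (Gr \<delta>0)) * (2 * exp (- 2 * real m * (\<epsilon> / 2)\<^sup>2 / ((D + B)\<^sup>2)\<^sup>2))"
    using hb B by (intro sum_bounded_above) auto
  also have "\<dots> \<le> (2 * R / \<delta>0 + 1) ^ PP * (2 * exp (- 2 * real m * (\<epsilon> / 2)\<^sup>2 / ((D + B)\<^sup>2)\<^sup>2))"
    using G by (intro mult_right_mono) auto
  also have "\<dots> \<le> \<rho>" using num unfolding \<delta>0_def C_def PP_def by (simp add: mult_ac)
  finally have cm: "measure M (space M - G0) \<le> \<rho>" .
  have G0m: "G0 \<in> sets M"
  proof -
    have "Measurable.pred M (\<lambda>\<omega>. \<forall>\<theta>\<in>Gr \<delta>0. Dl \<theta> \<omega> < \<epsilon> / 2)"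
    proof (intro pred_intros_finite(3))
      show "finite (Gr \<delta>0)" using G by blast
      fix \<theta> show "Measurable.pred M (\<lambda>\<omega>. Dl \<theta> \<omega> < \<epsilon> / 2)" using Dlm[of \<theta>] by measurable
    qed
    then show ?thesis unfolding G0_def pred_def .
  qed
  have "1 - \<rho> \<le> measure M G0" using prob_compl[OF G0m] cm by linarith
  also have "\<dots> \<le> measure M E" by (rule finite_measure_mono[OF G0E E_meas])
  finally show ?thesis unfolding E_def .
qed


lemma delta_sum: "(a::nat) \<le> N \<Longrightarrow> (\<Sum>i\<le>N. (if i = a then f i else (0::real))) = f a"
  by (simp add: sum.delta)

lemma sum_if_const: "(\<Sum>i\<in>A. if P then f i else (0::real)) = (if P then sum f A else 0)"
  by simp

lemma mono_eval:
  fixes x1 x2 x3 x4 x5 c :: real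
  assumes "a1 \<le> N" "a2 \<le> N" "a3 \<le> N" "a4 \<le> N" "a5 \<le> N"
  shows "(\<Sum>i1\<le>N. \<Sum>i2\<le>N. \<Sum>i3\<le>N. \<Sum>i4\<le>N. \<Sum>i5\<le>N.
          (if i1 = a1 \<and> i2 = a2 \<and> i3 = a3 \<and> i4 = a4 \<and> i5 = a5 then c else 0) * x1 ^ i1 * x2 ^ i2 * x3 ^ i3 * x4 ^ i4 * x5 ^ i5)
    = c * x1 ^ a1 * x2 ^ a2 * x3 ^ a3 * x4 ^ a4 * x5 ^ a5"
proof -
  have e: "\<And>i1 i2 i3 i4 i5. (if i1 = a1 \<and> i2 = a2 \<and> i3 = a3 \<and> i4 = a4 \<and> i5 = a5 then c else 0) * x1 ^ i1 * x2 ^ i2 * x3 ^ i3 * x4 ^ i4 * x5 ^ i5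
     = (if i1 = a1 then (if i2 = a2 then (if i3 = a3 then (if i4 = a4 then (if i5 = a5 then c * x1 ^ i1 * x2 ^ i2 * x3 ^ i3 * x4 ^ i4 * x5 ^ i5 else 0) else 0) else 0) else 0) else 0)"
    by auto
  show ?thesis unfolding e
    by (simp only: sum_if_const delta_sum assms)
qed

lemma poly5_3:
  fixes c :: real
  shows "poly5 (\<lambda>x1 x2 x3 x4 x5. c * x1 ^ a1 * x2 ^ a2 * x3 ^ a3 * x4 ^ a4 * x5 ^ a5
     + c * x1 ^ b1 * x2 ^ b2 * x3 ^ b3 * x4 ^ b4 * x5 ^ b5
     + c * x1 ^ e1 * x2 ^ e2 * x3 ^ e3 * x4 ^ e4 * x5 ^ e5)"
proof -
  define N where "N = a1 + a2 + a3 + a4 + a5 + b1 + b2 + b3 + b4 + b5 + e1 + e2 + e3 + e4 + e5"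
  define cf where "cf = (\<lambda>i1 i2 i3 i4 i5.
     (if i1 = a1 \<and> i2 = a2 \<and> i3 = a3 \<and> i4 = a4 \<and> i5 = a5 then c else 0)
   + (if i1 = b1 \<and> i2 = b2 \<and> i3 = b3 \<and> i4 = b4 \<and> i5 = b5 then c else 0)
   + (if i1 = e1 \<and> i2 = e2 \<and> i3 = e3 \<and> i4 = e4 \<and> i5 = e5 then c else (0::real)))"
  show ?thesis unfolding poly5_def
  proof (intro exI allI)
    fix x1 x2 x3 x4 x5 :: real
    show "c * x1 ^ a1 * x2 ^ a2 * x3 ^ a3 * x4 ^ a4 * x5 ^ a5
     + c * x1 ^ b1 * x2 ^ b2 * x3 ^ b3 * x4 ^ b4 * x5 ^ b5
     + c * x1 ^ e1 * x2 ^ e2 * x3 ^ e3 * x4 ^ e4 * x5 ^ e5 =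
       (\<Sum>i1\<le>N. \<Sum>i2\<le>N. \<Sum>i3\<le>N. \<Sum>i4\<le>N. \<Sum>i5\<le>N.
          cf i1 i2 i3 i4 i5 * x1 ^ i1 * x2 ^ i2 * x3 ^ i3 * x4 ^ i4 * x5 ^ i5)"
      unfolding cf_def distrib_right sum.distrib
      by (subst (1 2 3) mono_eval; simp add: N_def)
  qed
qed


lemma one_plus_prod: "0 \<le> a \<Longrightarrow> 0 \<le> (b::real) \<Longrightarrow> 1 + a * b \<le> (1 + a) * (1 + b)"
  by (simp add: algebra_simps)

lemma lnW_parts:
  fixes R q C \<epsilon> :: real
  assumes R: "0 < R" and q: "0 < q" and C: "1 \<le> C" and \<epsilon>: "0 < \<epsilon>"
  shows "ln (2 * R / (\<epsilon> / (8 * q * C)) + 1) \<le> ln (1 + R) + ln (1 + 16 * q) + ln (1 + C) + 1 / \<epsilon>"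
proof -
  have W: "2 * R / (\<epsilon> / (8 * q * C)) + 1 = 1 + R * (16 * q) * C * (1 / \<epsilon>)"
    using \<epsilon> q C by (simp add: field_simps)
  have "1 + R * (16 * q) * C * (1 / \<epsilon>) \<le> (1 + R * (16 * q) * C) * (1 + 1 / \<epsilon>)"
    using R q C \<epsilon> by (intro one_plus_prod) auto
  also have "\<dots> \<le> ((1 + R * (16 * q)) * (1 + C)) * (1 + 1 / \<epsilon>)"
    using R q C \<epsilon> by (intro mult_right_mono one_plus_prod) auto
  also have "\<dots> \<le> (((1 + R) * (1 + 16 * q)) * (1 + C)) * (1 + 1 / \<epsilon>)"
    using R q C \<epsilon> by (intro mult_right_mono one_plus_prod) auto
  finally have le: "2 * R / (\<epsilon> / (8 * q * C)) + 1 \<le> (1 + R) * (1 + 16 * q) * (1 + C) * (1 + 1 / \<epsilon>)"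
    unfolding W .
  have pos: "0 < 2 * R / (\<epsilon> / (8 * q * C)) + 1" unfolding W using R q C \<epsilon> by (simp add: add_pos_nonneg)
  have "ln (2 * R / (\<epsilon> / (8 * q * C)) + 1) \<le> ln ((1 + R) * (1 + 16 * q) * (1 + C) * (1 + 1 / \<epsilon>))"
    using le pos by simp
  also have "\<dots> = ln (1 + R) + ln (1 + 16 * q) + ln (1 + C) + ln (1 + 1 / \<epsilon>)"
  proof -
    have "0 < 1 + 1 / \<epsilon>" using \<epsilon> by (simp add: add_pos_nonneg)
    then show ?thesis using R q C \<epsilon> by (simp add: ln_mult)
  qed
  also have "ln (1 + 1 / \<epsilon>) \<le> 1 / \<epsilon>" using \<epsilon> by (intro ln_add_one_self_le_self) simp
  finally show ?thesis by simp
qed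

lemma abs_le_sq: "\<bar>t::real\<bar> \<le> 1 + t\<^sup>2"
proof (cases "\<bar>t\<bar> \<le> 1")
  case True then show ?thesis by (simp add: add_increasing2)
next
  case False
  then have "\<bar>t\<bar> \<le> \<bar>t\<bar> * \<bar>t\<bar>" by (intro mult_le_cancel_left1[THEN iffD2]) auto
  then show ?thesis by (simp add: power2_eq_square abs_mult_self_eq)
qed

lemma lnR_bound: "0 < (R::real) \<Longrightarrow> ln (1 + R) \<le> 2 + (ln R)\<^sup>2"
proof -
  assume R: "0 < R"
  have "ln (1 + R) \<le> 1 + \<bar>ln R\<bar>"
  proof (cases "R \<le> 1")
    case True
    have "ln (1 + R) \<le> ln 2" using True R by simp
    also have "\<dots> \<le> 1" using ln_le_minus_one[of 2] by simp
    finally show ?thesis by simp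
  next
    case False
    have "ln (1 + R) \<le> ln (2 * R)" using False by simp
    also have "\<dots> = ln 2 + ln R" using R by (simp add: ln_mult)
    also have "ln 2 \<le> (1::real)" using ln_le_minus_one[of 2] by simp
    finally show ?thesis by simp
  qed
  then show ?thesis using abs_le_sq[of "ln R"] by simp
qed

lemma lnC_bound:
  fixes P r0 R :: real
  assumes P: "P = real PP" "1 \<le> P" and r0: "0 \<le> r0" and R: "0 < R"
  shows "ln (1 + P * (r0 + 1) * (2 * max 1 R * P) ^ PP) \<le> 1 + P + r0 + P * (1 + \<bar>ln R\<bar> + P)"
proof -
  let ?C = "P * (r0 + 1) * (2 * max 1 R * P) ^ PP"
  have b: "1 \<le> 2 * max 1 R * P" using P mult_mono[of 1 "2 * max 1 R" 1 P] by auto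
  have C1: "1 \<le> ?C"
  proof -
    have "1 \<le> (2 * max 1 R * P) ^ PP" using b by (simp add: one_le_power)
    moreover have "1 \<le> P * (r0 + 1)" using P r0 mult_mono[of 1 P 1 "r0+1"] by auto
    ultimately show ?thesis using mult_mono[of 1 "P * (r0 + 1)" 1 "(2 * max 1 R * P) ^ PP"] by auto
  qed
  have "ln (1 + ?C) \<le> ln (2 * ?C)" using C1 by simp
  also have "\<dots> = ln 2 + ln P + ln (r0 + 1) + P * (ln 2 + ln (max 1 R) + ln P)"
    using P r0 b R by (simp add: ln_mult ln_realpow)
  also have "\<dots> \<le> 1 + P + r0 + P * (1 + \<bar>ln R\<bar> + P)"
  proof -
    have l2: "ln 2 \<le> (1::real)" using ln_le_minus_one[of 2] by simp
    have lP: "ln P \<le> P" using P by (intro ln_bound) auto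
    have lr: "ln (r0 + 1) \<le> r0" using ln_le_minus_one[of "r0 + 1"] r0 by simp
    have lR: "ln (max 1 R) \<le> \<bar>ln R\<bar>" by (cases "R \<le> 1") (auto simp: max_def)
    have "P * (ln 2 + ln (max 1 R) + ln P) \<le> P * (1 + \<bar>ln R\<bar> + P)"
      using l2 lP lR P by (intro mult_left_mono) auto
    then show ?thesis using l2 lP lr by linarith
  qed
  finally show ?thesis .
qed

lemma lnDB_bound:
  fixes D B c3' X P lam K :: real
  assumes DB: "D + B \<le> c3' * D * X" and c: "1 \<le> c3'" and D: "1 \<le> D" and X: "1 \<le> X" and B: "0 \<le> B"
    and lX: "ln X \<le> lam * P + K powr lam"
  shows "ln (1 + 16 * (D + B)) \<le> ln (1 + 16 * c3') + D + lam * P + K powr lam"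
proof -
  have DX: "1 \<le> D * X" using D X mult_mono[of 1 D 1 X] by auto
  have "1 + 16 * (D + B) \<le> 1 + 16 * (c3' * D * X)" using DB by simp
  also have "\<dots> \<le> (1 + 16 * c3') * (D * X)" using DX c by (simp add: algebra_simps)
  finally have le: "1 + 16 * (D + B) \<le> (1 + 16 * c3') * (D * X)" .
  have "ln (1 + 16 * (D + B)) \<le> ln ((1 + 16 * c3') * (D * X))" using le D B by simp
  also have "\<dots> = ln (1 + 16 * c3') + ln D + ln X" using c D X by (simp add: ln_mult)
  also have "ln D \<le> D" using D by (intro ln_bound) auto
  finally show ?thesis using lX by simp
qed


lemma one_le_mult': "1 \<le> (a::real) \<Longrightarrow> 1 \<le> b \<Longrightarrow> 1 \<le> a * b"
  using mult_mono[of 1 a 1 b] by simp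

lemma le_mult_ge1: "0 \<le> (x::real) \<Longrightarrow> 1 \<le> r \<Longrightarrow> x \<le> x * r"
  using mult_left_mono[of 1 r x] by simp

lemma sum_bound:
  fixes Kl P D x1 lam r0 c0 L :: real
  assumes Kl: "1 \<le> Kl" and P: "1 \<le> P" and D: "1 \<le> D" and x1: "1 \<le> x1" and lam: "0 \<le> lam"
    and r0: "0 \<le> r0" and c0: "0 \<le> c0"
  shows "P * ((2 + L\<^sup>2) + (c0 + D + lam * P + Kl) + (1 + P + r0 + P * (1 + \<bar>L\<bar> + P)) + x1)
    \<le> (20 + c0 + lam + r0) * (Kl * (P * P * P) * D * x1 * (1 + L\<^sup>2))"
proof -
  define Lq where "Lq = 1 + L\<^sup>2"
  define Z where "Z = Kl * (P * P * P) * D * x1 * Lq"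
  have Lq: "1 \<le> Lq" unfolding Lq_def by simp
  have LL: "L\<^sup>2 \<le> Lq" "\<bar>L\<bar> \<le> Lq" unfolding Lq_def using abs_le_sq[of L] by auto
  have P0: "0 \<le> P" using P by simp
  have f1: "P \<le> Z"
  proof -
    have "Z = P * (Kl * P * P * D * x1 * Lq)" unfolding Z_def by (simp add: algebra_simps)
    moreover have "1 \<le> Kl * P * P * D * x1 * Lq" using Kl P D x1 Lq by (intro one_le_mult') auto
    ultimately show ?thesis using le_mult_ge1[OF P0] by simp
  qed
  have f2: "P * P \<le> Z"
  proof -
    have "Z = (P * P) * (Kl * P * D * x1 * Lq)" unfolding Z_def by (simp add: algebra_simps)
    moreover have "1 \<le> Kl * P * D * x1 * Lq" using Kl P D x1 Lq by (intro one_le_mult') auto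
    ultimately show ?thesis using le_mult_ge1[of "P * P"] P0 by simp
  qed
  have f3: "P * P * P \<le> Z"
  proof -
    have "Z = (P * P * P) * (Kl * D * x1 * Lq)" unfolding Z_def by (simp add: algebra_simps)
    moreover have "1 \<le> Kl * D * x1 * Lq" using Kl D x1 Lq by (intro one_le_mult') auto
    ultimately show ?thesis using le_mult_ge1[of "P * P * P"] P0 by simp
  qed
  have f4: "P * L\<^sup>2 \<le> Z"
  proof -
    have "Z = (P * Lq) * (Kl * P * P * D * x1)" unfolding Z_def by (simp add: algebra_simps)
    moreover have "1 \<le> Kl * P * P * D * x1" using Kl P D x1 by (intro one_le_mult') auto
    moreover have "P * L\<^sup>2 \<le> P * Lq" using LL P0 by (intro mult_left_mono) auto
    ultimately show ?thesis using le_mult_ge1[of "P * Lq"] P0 Lq by (smt (verit) mult_nonneg_nonneg)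
  qed
  have f5: "P * D \<le> Z"
  proof -
    have "Z = (P * D) * (Kl * P * P * x1 * Lq)" unfolding Z_def by (simp add: algebra_simps)
    moreover have "1 \<le> Kl * P * P * x1 * Lq" using Kl P x1 Lq by (intro one_le_mult') auto
    ultimately show ?thesis using le_mult_ge1[of "P * D"] P0 D by simp
  qed
  have f6: "P * Kl \<le> Z"
  proof -
    have "Z = (P * Kl) * (P * P * D * x1 * Lq)" unfolding Z_def by (simp add: algebra_simps)
    moreover have "1 \<le> P * P * D * x1 * Lq" using P D x1 Lq by (intro one_le_mult') auto
    ultimately show ?thesis using le_mult_ge1[of "P * Kl"] P0 Kl by simp
  qed
  have f7: "P * x1 \<le> Z"
  proof -
    have "Z = (P * x1) * (Kl * P * P * D * Lq)" unfolding Z_def by (simp add: algebra_simps)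
    moreover have "1 \<le> Kl * P * P * D * Lq" using Kl P D Lq by (intro one_le_mult') auto
    ultimately show ?thesis using le_mult_ge1[of "P * x1"] P0 x1 by simp
  qed
  have f8: "P * P * \<bar>L\<bar> \<le> Z"
  proof -
    have "Z = (P * P * Lq) * (Kl * P * D * x1)" unfolding Z_def by (simp add: algebra_simps)
    moreover have "1 \<le> Kl * P * D * x1" using Kl P D x1 by (intro one_le_mult') auto
    moreover have "P * P * \<bar>L\<bar> \<le> P * P * Lq" using LL P0 by (intro mult_left_mono) auto
    ultimately show ?thesis using le_mult_ge1[of "P * P * Lq"] P0 Lq by (smt (verit) mult_nonneg_nonneg)
  qed
  have g1: "c0 * P \<le> c0 * Z" using f1 c0 by (rule mult_left_mono)
  have g2: "lam * (P * P) \<le> lam * Z" using f2 lam by (rule mult_left_mono)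
  have g3: "r0 * P \<le> r0 * Z" using f1 r0 by (rule mult_left_mono)
  have e1: "P * ((2 + L\<^sup>2) + (c0 + D + lam * P + Kl) + (1 + P + r0 + P * (1 + \<bar>L\<bar> + P)) + x1)
    = 2 * P + P * L\<^sup>2 + c0 * P + P * D + lam * (P * P) + P * Kl + P + P * P + r0 * P + P * P
      + P * P * \<bar>L\<bar> + P * P * P + P * x1" by (simp add: algebra_simps)
  have e2: "(20 + c0 + lam + r0) * Z = 20 * Z + c0 * Z + lam * Z + r0 * Z" by (simp add: algebra_simps)
  have Z0: "0 \<le> Z" using f1 P by linarith
  have "P * ((2 + L\<^sup>2) + (c0 + D + lam * P + Kl) + (1 + P + r0 + P * (1 + \<bar>L\<bar> + P)) + x1)
    \<le> (20 + c0 + lam + r0) * Z"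
    unfolding e1 e2 using f1 f2 f3 f4 f5 f6 f7 f8 g1 g2 g3 Z0 by linarith
  then show ?thesis unfolding Z_def Lq_def .
qed


definition h2c :: "real \<Rightarrow> real \<Rightarrow> real \<Rightarrow> real \<Rightarrow> real \<Rightarrow> real \<Rightarrow> real \<Rightarrow> real \<Rightarrow> real" where
  "h2c c2 lam r0 x1 x2 x3 x4 x5 = (2 * (1 + 2 * c2) ^ 4 * (21 + ln (1 + 16 * (1 + 2 * c2)) + lam + r0))
      * x1 ^ 3 * x2 ^ (nat \<lceil>4 * lam\<rceil> + 3) * x5 ^ 5 * (1 + x3\<^sup>2 + x4)"

lemma arith_final:
  fixes c2 lam r0 R K D \<epsilon> \<rho> m B :: real and d PP :: nat
  assumes c2: "0 < c2" and lam: "2 \<le> lam" and r0: "0 \<le> r0" and d: "1 \<le> d" and dP: "d \<le> PP"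
    and R: "0 < R" and K: "1 \<le> K" and D: "1 \<le> D" and \<epsilon>: "0 < \<epsilon>" "\<epsilon> < 1" and \<rho>: "0 < \<rho>" "\<rho> < 1"
    and mge: "K powr (5 * lam) * h2c c2 lam r0 (1 / \<epsilon>) (real PP) (ln R) (ln (1 / \<rho>)) D \<le> m"
    and B_def: "B = c2 * (1 + (real d * K) powr lam)"
  shows "2 * (2 * R / (\<epsilon> / (8 * (D + B) * (real PP * (r0 + 1) * (2 * max 1 R * real PP) ^ PP))) + 1) ^ PP
     * exp (- 2 * m * (\<epsilon> / 2)\<^sup>2 / ((D + B)\<^sup>2)\<^sup>2) \<le> \<rho>"
proof -
  define P where "P = real PP"
  define x1 where "x1 = 1 / \<epsilon>"
  define L where "L = ln R"
  define x4 where "x4 = ln (1 / \<rho>)"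
  define Kl where "Kl = K powr lam"
  define K4 where "K4 = K powr (4 * lam)"
  define X where "X = (real d * K) powr lam"
  define c3' where "c3' = 1 + 2 * c2"
  define c0 where "c0 = ln (1 + 16 * c3')"
  define c6 where "c6 = 20 + c0 + lam + r0"
  define q0 where "q0 = nat \<lceil>4 * lam\<rceil>"
  define C where "C = P * (r0 + 1) * (2 * max 1 R * P) ^ PP"
  define W where "W = 2 * R / (\<epsilon> / (8 * (D + B) * C)) + 1"
  have P1: "1 \<le> P" unfolding P_def using d dP by simp
  have x1: "1 \<le> x1" unfolding x1_def using \<epsilon> by simp
  have x4: "0 < x4" unfolding x4_def using \<rho> by simp
  have Kl: "1 \<le> Kl" unfolding Kl_def using K lam by (intro ge_one_powr_ge_zero) auto
  have dK: "1 \<le> real d * K" using d K one_le_mult'[of "real d" K] by simp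
  have X1: "1 \<le> X" unfolding X_def using dK lam by (intro ge_one_powr_ge_zero) auto
  have c3': "1 \<le> c3'" unfolding c3'_def using c2 by simp
  have c0: "0 \<le> c0" unfolding c0_def using c3' by simp
  have B0: "0 \<le> B" unfolding B_def using c2 by simp
  have DBle: "D + B \<le> c3' * D * X"
  proof -
    have "B \<le> 2 * c2 * X" unfolding B_def X_def[symmetric] using c2 X1 by (simp add: algebra_simps)
    also have "\<dots> \<le> 2 * c2 * (D * X)" using c2 X1 D le_mult_ge1[of X D] by (simp add: mult.commute)
    finally have "B \<le> 2 * c2 * (D * X)" .
    moreover have "D \<le> D * X" using D X1 le_mult_ge1[of D X] by simp
    ultimately show ?thesis unfolding c3'_def by (simp add: algebra_simps)
  qed
  have lX: "ln X \<le> lam * P + K powr lam"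
  proof -
    have "ln X = lam * ln (real d) + ln Kl" unfolding X_def Kl_def using d K by (simp add: ln_mult algebra_simps)
    moreover have "ln (real d) \<le> P" using ln_bound[of "real d"] d dP unfolding P_def by simp
    moreover have "ln Kl \<le> Kl" using Kl by (intro ln_bound) auto
    ultimately show ?thesis unfolding Kl_def using lam by (smt (verit) mult_left_mono)
  qed
  have C1: "1 \<le> C"
  proof -
    have b: "1 \<le> 2 * max 1 R * P" using P1 mult_mono[of 1 "2 * max 1 R" 1 P] by auto
    have "1 \<le> (2 * max 1 R * P) ^ PP" using b by (simp add: one_le_power)
    moreover have "1 \<le> P * (r0 + 1)" using P1 r0 mult_mono[of 1 P 1 "r0+1"] by auto
    ultimately show ?thesis unfolding C_def by (rule one_le_mult'[rotated])
  qed
  have DB: "0 < D + B" using D B0 by simp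
  have lnW: "ln W \<le> (2 + L\<^sup>2) + (c0 + D + lam * P + Kl) + (1 + P + r0 + P * (1 + \<bar>L\<bar> + P)) + x1"
  proof -
    have "ln W \<le> ln (1 + R) + ln (1 + 16 * (D + B)) + ln (1 + C) + 1 / \<epsilon>"
      unfolding W_def by (rule lnW_parts[OF R DB C1 \<epsilon>(1)])
    moreover have "ln (1 + R) \<le> 2 + L\<^sup>2" unfolding L_def by (rule lnR_bound[OF R])
    moreover have "ln (1 + 16 * (D + B)) \<le> c0 + D + lam * P + Kl"
      unfolding c0_def Kl_def by (rule lnDB_bound[OF DBle c3' D X1 B0 lX])
    moreover have "ln (1 + C) \<le> 1 + P + r0 + P * (1 + \<bar>L\<bar> + P)"
      unfolding C_def L_def by (rule lnC_bound[OF P_def P1 r0 R])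
    ultimately show ?thesis unfolding x1_def by linarith
  qed
  define Y where "Y = Kl * (P * P * P) * D * x1"
  have Y1: "1 \<le> Y" unfolding Y_def using Kl P1 D x1 by (intro one_le_mult') (auto intro: one_le_mult')
  define Z' where "Z' = Y * (1 + L\<^sup>2 + x4)"
  have PlnW: "P * ln W \<le> c6 * (Y * (1 + L\<^sup>2))"
  proof -
    have "P * ln W \<le> P * ((2 + L\<^sup>2) + (c0 + D + lam * P + Kl) + (1 + P + r0 + P * (1 + \<bar>L\<bar> + P)) + x1)"
      using lnW P1 by (intro mult_left_mono) auto
    also have "\<dots> \<le> c6 * (Y * (1 + L\<^sup>2))" unfolding c6_def Y_def
      using sum_bound[of Kl P D x1 lam r0 c0 L] Kl P1 D x1 r0 c0 lam by (simp add: mult.assoc)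
    finally show ?thesis .
  qed
  have T: "ln 2 + P * ln W + x4 \<le> (c6 + 1) * Z'"
  proof -
    have l2: "ln 2 \<le> (1::real)" using ln_le_minus_one[of 2] by simp
    have c6: "0 \<le> c6" unfolding c6_def using c0 lam r0 by simp
    have "Y * (1 + L\<^sup>2) \<le> Z'" unfolding Z'_def using Y1 x4 by (intro mult_left_mono) auto
    then have a: "c6 * (Y * (1 + L\<^sup>2)) \<le> c6 * Z'" using c6 by (intro mult_left_mono) auto
    have "1 * (1 + x4) \<le> Y * (1 + L\<^sup>2 + x4)" using Y1 x4 by (intro mult_mono) auto
    then have b: "1 + x4 \<le> Z'" unfolding Z'_def by simp
    have "(c6 + 1) * Z' = c6 * Z' + Z'" by (simp add: algebra_simps)
    then show ?thesis using PlnW a b l2 by linarith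
  qed
  have DB4: "(D + B) ^ 4 \<le> c3' ^ 4 * D ^ 4 * P ^ q0 * K4"
  proof -
    have "(D + B) ^ 4 \<le> (c3' * D * X) ^ 4" using DBle DB by (intro power_mono) auto
    also have "\<dots> = c3' ^ 4 * D ^ 4 * X ^ 4" by (simp add: power_mult_distrib)
    also have "X ^ 4 = real d powr (4 * lam) * K4"
    proof -
      have "X ^ 4 = X powr (real 4)" using X1 by (subst powr_realpow) auto
      also have "\<dots> = (real d * K) powr (lam * 4)" unfolding X_def by (simp add: powr_powr)
      also have "\<dots> = real d powr (4 * lam) * K4" unfolding K4_def using d K by (simp add: powr_mult mult.commute)
      finally show ?thesis .
    qed
    also have "real d powr (4 * lam) \<le> P ^ q0"
    proof -
      have "real d powr (4 * lam) \<le> P powr (4 * lam)" using dP lam d unfolding P_def by (intro powr_mono2) auto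
      also have "\<dots> \<le> P powr (real q0)" unfolding q0_def using P1 by (intro powr_mono) (auto simp: real_nat_ceiling_ge)
      also have "\<dots> = P ^ q0" using P1 by (subst powr_realpow) auto
      finally show ?thesis .
    qed
    then have "c3' ^ 4 * D ^ 4 * (real d powr (4 * lam) * K4) \<le> c3' ^ 4 * D ^ 4 * (P ^ q0 * K4)"
      using c3' D unfolding K4_def by (intro mult_left_mono mult_right_mono) auto
    finally show ?thesis by (simp add: mult.assoc)
  qed
  define A where "A = 2 * m * (\<epsilon> / 2)\<^sup>2 / ((D + B)\<^sup>2)\<^sup>2"
  have A_eq: "A = m * \<epsilon>\<^sup>2 / (2 * (D + B) ^ 4)"
  proof -
    have p4: "((D + B)\<^sup>2)\<^sup>2 = (D + B) ^ 4" by (simp flip: power_mult)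
    have n: "2 * m * (\<epsilon> / 2)\<^sup>2 = m * \<epsilon>\<^sup>2 / 2" by (simp add: power2_eq_square)
    show ?thesis unfolding A_def p4 n by simp
  qed
  have key: "(c6 + 1) * Z' * (2 * (D + B) ^ 4) \<le> m * \<epsilon>\<^sup>2"
  proof -
    have Z'0: "0 \<le> (c6 + 1) * Z'" unfolding Z'_def c6_def using Y1 x4 c0 lam r0 by (intro mult_nonneg_nonneg) auto
    have "(c6 + 1) * Z' * (2 * (D + B) ^ 4) \<le> (c6 + 1) * Z' * (2 * (c3' ^ 4 * D ^ 4 * P ^ q0 * K4))"
      using DB4 Z'0 by (intro mult_left_mono) auto
    also have "\<dots> = (K powr (5 * lam) * h2c c2 lam r0 (1 / \<epsilon>) (real PP) (ln R) (ln (1 / \<rho>)) D) * \<epsilon>\<^sup>2"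
    proof -
      have K5: "K powr (5 * lam) = Kl * K4" unfolding Kl_def K4_def by (simp add: powr_add[symmetric])
      have x1e: "x1 * \<epsilon> = 1" unfolding x1_def using \<epsilon> by simp
      have "h2c c2 lam r0 (1 / \<epsilon>) (real PP) (ln R) (ln (1 / \<rho>)) D
          = 2 * c3' ^ 4 * (c6 + 1) * x1 ^ 3 * (P ^ q0 * (P * P * P)) * D ^ 5 * (1 + L\<^sup>2 + x4)"
        unfolding h2c_def c3'_def c6_def c0_def q0_def x1_def P_def L_def x4_def
        by (simp add: power_add algebra_simps eval_nat_numeral)
      then have "(K powr (5 * lam) * h2c c2 lam r0 (1 / \<epsilon>) (real PP) (ln R) (ln (1 / \<rho>)) D) * \<epsilon>\<^sup>2
         = 2 * c3' ^ 4 * (c6 + 1) * (x1 * (x1 * \<epsilon>) * (x1 * \<epsilon>)) * (P ^ q0 * (P * P * P)) * D ^ 5 * (1 + L\<^sup>2 + x4) * (Kl * K4)"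
        unfolding K5 by (simp add: algebra_simps power2_eq_square eval_nat_numeral)
      also have "\<dots> = (c6 + 1) * Z' * (2 * (c3' ^ 4 * D ^ 4 * P ^ q0 * K4))"
        unfolding x1e Z'_def Y_def by (simp add: algebra_simps eval_nat_numeral)
      finally show ?thesis by simp
    qed
    also have "\<dots> \<le> m * \<epsilon>\<^sup>2" using mge by (intro mult_right_mono) auto
    finally show ?thesis .
  qed
  have AT: "ln 2 + P * ln W + x4 \<le> A"
  proof -
    have "(c6 + 1) * Z' \<le> m * \<epsilon>\<^sup>2 / (2 * (D + B) ^ 4)"
      using key DB by (simp add: pos_le_divide_eq)
    then show ?thesis using T A_eq by simp
  qed
  have W0: "0 < W" unfolding W_def using R \<epsilon> DB C1 by (simp add: add_pos_nonneg)
  have "exp (- A) \<le> exp (- (ln 2 + P * ln W + x4))" using AT by simp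
  also have "\<dots> = \<rho> / (2 * W ^ PP)"
  proof -
    have "exp (- (ln 2 + P * ln W + x4)) = exp (- ln 2) * exp (- (P * ln W)) * exp (- x4)"
      by (simp add: exp_add[symmetric] exp_diff)
    also have "exp (- ln 2) = (1::real) / 2" by (simp add: exp_minus)
    also have "exp (- (P * ln W)) = 1 / W ^ PP"
      using W0 unfolding P_def by (simp add: exp_minus ln_realpow[symmetric] inverse_eq_divide)
    also have "exp (- x4) = \<rho>" unfolding x4_def using \<rho> by (simp add: exp_minus ln_div)
    finally show ?thesis by simp
  qed
  finally have "2 * W ^ PP * exp (- A) \<le> 2 * W ^ PP * (\<rho> / (2 * W ^ PP))"
    using W0 by (intro mult_left_mono) auto
  also have "\<dots> = \<rho>" using W0 by simp
  finally have fin: "2 * W ^ PP * exp (- A) \<le> \<rho>" .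
  show ?thesis using fin unfolding W_def A_def C_def P_def
    by (simp only: mult_minus_left minus_divide_left[symmetric])
qed


lemma norm2_le: "(\<forall>i<d. \<bar>y i\<bar> \<le> K) \<Longrightarrow> norm2 d y \<le> real d * K"
proof -
  assume a: "\<forall>i<d. \<bar>y i\<bar> \<le> K"
  have "norm2 d y = L2_set y {..<d}" unfolding norm2_def L2_set_def by simp
  also have "\<dots> \<le> (\<Sum>i<d. \<bar>y i\<bar>)" by (rule L2_set_le_sum_abs)
  also have "\<dots> \<le> (\<Sum>i<d. K)" using a by (intro sum_mono) auto
  finally show ?thesis by simp
qed

theorem proposition3p7:
  fixes T u v c1 c2 lam :: real
    and M :: "nat \<Rightarrow> 'w measure"
    and X Y :: "nat \<Rightarrow> 'w \<Rightarrow> nat \<Rightarrow> real"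
    and xs ys :: "nat \<Rightarrow> nat \<Rightarrow> 'w \<Rightarrow> nat \<Rightarrow> real"
    and \<phi> :: "nat \<Rightarrow> (nat \<Rightarrow> real) \<Rightarrow> real"
  assumes "0 < T" and "u < v"
    and prob: "\<And>d. prob_space (M d)"
    and X_meas: "\<And>d. X d \<in> measurable (M d) (vec_space d)"
    and Y_meas: "\<And>d. Y d \<in> measurable (M d) (vec_space d)"
    and X_unif: "\<And>d. d \<ge> 1 \<Longrightarrow> distr (M d) (vec_space d) (X d) = unif_cube u v d"
    and sample_meas: "\<And>d i. (\<lambda>\<omega>. (xs d i \<omega>, ys d i \<omega>))
                        \<in> measurable (M d) (vec_space d \<Otimes>\<^sub>M vec_space d)"
    and sample_indep: "\<And>d. prob_space.indep_vars (M d) (\<lambda>_. vec_space d \<Otimes>\<^sub>M vec_space d)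
                          (\<lambda>i \<omega>. (xs d i \<omega>, ys d i \<omega>)) UNIV"
    and sample_distr: "\<And>d i. distr (M d) (vec_space d \<Otimes>\<^sub>M vec_space d) (\<lambda>\<omega>. (xs d i \<omega>, ys d i \<omega>))
                          = distr (M d) (vec_space d \<Otimes>\<^sub>M vec_space d) (\<lambda>\<omega>. (X d \<omega>, Y d \<omega>))"
    and phi_meas: "\<And>d. \<phi> d \<in> borel_measurable (vec_space d)"
    and c1: "0 < c1"
    and cond_i: "\<And>d t i. d \<ge> 1 \<Longrightarrow> t \<ge> 1 \<Longrightarrow> i < d \<Longrightarrow>
                   measure (M d) {\<omega> \<in> space (M d). \<bar>Y d \<omega> i\<bar> \<ge> t} \<le> 2 * exp (- c1 * (ln t)\<^sup>2)"
    and c2: "0 < c2" and lam_ge: "2 \<le> lam"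
    and cond_ii: "\<And>d y. d \<ge> 1 \<Longrightarrow> \<bar>\<phi> d y\<bar> \<le> c2 * (1 + norm2 d y powr lam)"
  shows "\<exists>h2. poly5 h2 \<and>
    (\<forall>d a R K D \<epsilon> \<rho> m. d \<ge> 1 \<longrightarrow> is_arch d a \<longrightarrow> 0 < R \<longrightarrow> 1 \<le> K \<longrightarrow> 1 \<le> D \<longrightarrow>
       0 < \<epsilon> \<longrightarrow> \<epsilon> < 1 \<longrightarrow> 0 < \<rho> \<longrightarrow> \<rho> < 1 \<longrightarrow>
       real m \<ge> K powr (5 * lam) * h2 (1 / \<epsilon>) (real (param_count a)) (ln R) (ln (1 / \<rho>)) D \<longrightarrow>
       measure (M d) {\<omega> \<in> space (M d). \<forall>f \<in> NN_class u v a R D.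
          \<bar>(\<integral>\<omega>'. (f (X d \<omega>') - trunc d K (\<phi> d) (Y d \<omega>'))\<^sup>2 \<partial>M d)
           - (1 / real m) * (\<Sum>i\<in>{1..m}. (f (xs d i \<omega>) - trunc d K (\<phi> d) (ys d i \<omega>))\<^sup>2)\<bar> \<le> \<epsilon>}
       \<ge> 1 - \<rho>)"
proof -
  define r0 where "r0 = max \<bar>u\<bar> \<bar>v\<bar>"
  define h2 where "h2 = h2c c2 lam r0"
  define c7 where "c7 = 2 * (1 + 2 * c2) ^ 4 * (21 + ln (1 + 16 * (1 + 2 * c2)) + lam + r0)"
  define q where "q = nat \<lceil>4 * lam\<rceil> + 3"
  have c7: "0 < c7" unfolding c7_def r0_def using c2 lam_ge by (intro mult_pos_pos add_pos_nonneg) auto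
  have h2_eq: "h2 = (\<lambda>x1 x2 x3 x4 x5. c7 * x1 ^ 3 * x2 ^ q * x3 ^ 0 * x4 ^ 0 * x5 ^ 5
     + c7 * x1 ^ 3 * x2 ^ q * x3 ^ 2 * x4 ^ 0 * x5 ^ 5
     + c7 * x1 ^ 3 * x2 ^ q * x3 ^ 0 * x4 ^ 1 * x5 ^ 5)"
    unfolding h2_def h2c_def c7_def q_def by (intro ext) (simp add: algebra_simps)
  show ?thesis
  proof (intro exI[of _ h2] conjI allI impI)
    show "poly5 h2" unfolding h2_eq by (rule poly5_3)
  next
    fix d a R K D \<epsilon> \<rho> m
    assume d: "1 \<le> d" and arch: "is_arch d a" and R: "0 < R" and K: "1 \<le> K" and D: "1 \<le> D"
      and \<epsilon>: "0 < \<epsilon>" "\<epsilon> < 1" and \<rho>: "0 < \<rho>" "\<rho> < 1"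
      and mge: "K powr (5 * lam) * h2 (1 / \<epsilon>) (real (param_count a)) (ln R) (ln (1 / \<rho>)) D \<le> real m"
    define B where "B = c2 * (1 + (real d * K) powr lam)"
    have B0: "0 \<le> B" unfolding B_def using c2 by simp
    have len: "2 \<le> length a" "hd a = d" using arch by (auto simp: is_arch_def)
    have pos: "\<forall>n\<in>set a. 1 \<le> n" using arch unfolding is_arch_def by (metis in_set_conv_nth)
    from param_count_facts[OF len(1) pos] have "\<forall>n\<in>set a. n + 1 \<le> param_count a" by auto
    then have dP: "d \<le> param_count a" using len by (cases a) auto
    have tb: "\<And>y. \<bar>trunc d K (\<phi> d) y\<bar> \<le> B"
    proof -
      fix y
      show "\<bar>trunc d K (\<phi> d) y\<bar> \<le> B"
      proof (cases "\<forall>i<d. \<bar>y i\<bar> \<le> K")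
        case True
        have "\<bar>\<phi> d y\<bar> \<le> c2 * (1 + norm2 d y powr lam)" by (rule cond_ii[OF d])
        also have "\<dots> \<le> c2 * (1 + (real d * K) powr lam)"
          using norm2_le[OF True] c2 lam_ge by (intro mult_left_mono add_left_mono powr_mono2) (auto simp: norm2_def intro: sum_nonneg)
        finally show ?thesis using True trunc_eq[OF d] unfolding B_def by simp
      next
        case False
        have "trunc d K (\<phi> d) y = 0" unfolding trunc_eq[OF d] using False by (rule if_not_P)
        then show ?thesis using B0 by simp
      qed
    qed
    have hpos: "0 < K powr (5 * lam) * h2 (1 / \<epsilon>) (real (param_count a)) (ln R) (ln (1 / \<rho>)) D"
    proof -
      have "0 < h2 (1 / \<epsilon>) (real (param_count a)) (ln R) (ln (1 / \<rho>)) D"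
        unfolding h2_def h2c_def c7_def[symmetric] using c7 \<epsilon> \<rho> D d dP
        by (intro mult_pos_pos zero_less_power add_pos_nonneg) auto
      then show ?thesis using K by simp
    qed
    then have m: "0 < m" using mge by simp
    have num: "2 * (2 * R / (\<epsilon> / (8 * (D + B) * (real (param_count a) * (max \<bar>u\<bar> \<bar>v\<bar> + 1) *
                 (2 * max 1 R * real (param_count a)) ^ param_count a))) + 1) ^ param_count a
              * exp (- 2 * real m * (\<epsilon> / 2)\<^sup>2 / ((D + B)\<^sup>2)\<^sup>2) \<le> \<rho>"
      unfolding r0_def[symmetric]
      by (rule arith_final[OF c2 lam_ge _ _ dP R K D \<epsilon> \<rho> mge[unfolded h2_def] B_def]) (use d in \<open>auto simp: r0_def\<close>)
    show "1 - \<rho> \<le> measure (M d) {\<omega> \<in> space (M d). \<forall>f \<in> NN_class u v a R D.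
          \<bar>(\<integral>\<omega>'. (f (X d \<omega>') - trunc d K (\<phi> d) (Y d \<omega>'))\<^sup>2 \<partial>M d)
           - (1 / real m) * (\<Sum>i\<in>{1..m}. (f (xs d i \<omega>) - trunc d K (\<phi> d) (ys d i \<omega>))\<^sup>2)\<bar> \<le> \<epsilon>}"
      by (rule main_fixed[OF prob X_meas Y_meas sample_meas sample_indep sample_distr
            trunc_meas[OF d phi_meas] tb B0 arch R D \<epsilon>(1) m num])
  qed
qed


end
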